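(* Let $n\ge1$, let $J:\mathbb{R}_{+}\to\mathbb{R}_{+}$ be continuous with $\int_{\mathbb{Q}_p^n}J(\|x\|_p)\,d^nx=1$, and assume $J(\|x\|_p)$ is of exponential type with exponent $\gamma$ satisfying $-n<\gamma<0$. Then $$\frac{\Omega(\|\xi\|_p)}{1-\widehat{J}(\|\xi\|_p)}\notin L^1(\mathbb{Q}_p^n,d^n\xi).$$
   Context: $p$ is a prime, $\|x\|_p=\max_i|x_i|_p$ on $\mathbb{Q}_p^n$, $d^nx$ is the Haar measure normalized so that $\mathbb{Z}_p^n$ has measure $1$, $\chi_p(y)=\exp(2\pi i\{y\}_p)$ is the standard additive character, and $\widehat{J}(\xi)=\int_{\mathbb{Q}_p^n}\chi_p(\xi\cdot x)J(\|x\|_p)\,d^nx$ (a radial function, written $\widehat{J}(\|\xi\|_p)$). $\Omega(\|\xi\|_p)$ is the characteristic function of $\mathbb{Z}_p^n=\{\|\xi\|_p\le1\}$. $J(\|x\|_p)$ is of exponential type if there exist positive constants $A,B,C_1$ and a real $\gamma>-n$ with $A\|x\|_p^{\gamma}e^{-C_1\|x\|_p}\le J(\|x\|_p)\le B\|x\|_p^{\gamma}e^{-C_1\|x\|_p}$ for all $x\in\mathbb{Q}_p^n$. *)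

theory Defs
  imports "HOL-Analysis.Analysis" "HOL-Computational_Algebra.Primes"
begin

text \<open>An element x of Q_p is represented by the sequence of its residues modulo p^k Z_p,
  k = 0,1,2,...: the k-th entry is the unique representative of x mod p^k Z_p in
  Z[1/p] intersected with [0, p^k).  The carrier padic p consists of compatible sequences
  with uniformly bounded p-power denominators; this is in bijection with Q_p.
  In particular x 0 is the p-adic fractional part of x.\<close>

definition qmod :: "rat \<Rightarrow> rat \<Rightarrow> rat" where
  "qmod r m = r - m * of_int \<lfloor>r / m\<rfloor>"

definition padic :: "nat \<Rightarrow> (nat \<Rightarrow> rat) set" where
  "padic p = {x. (\<forall>k. 0 \<le> x k \<and> x k < of_nat p ^ k \<and>
                        (\<exists>a::int. x (Suc k) - x k = of_int a * of_nat p ^ k)) \<and>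
                  (\<exists>e::nat. \<forall>k. \<exists>a::int. x k = of_int a / of_nat p ^ e)}"

definition pzero :: "nat \<Rightarrow> rat" where
  "pzero = (\<lambda>k. 0)"

definition padd :: "nat \<Rightarrow> (nat \<Rightarrow> rat) \<Rightarrow> (nat \<Rightarrow> rat) \<Rightarrow> nat \<Rightarrow> rat" where
  "padd p x y = (\<lambda>k. qmod (x k + y k) (of_nat p ^ k))"

definition psub :: "nat \<Rightarrow> (nat \<Rightarrow> rat) \<Rightarrow> (nat \<Rightarrow> rat) \<Rightarrow> nat \<Rightarrow> rat" where
  "psub p x y = (\<lambda>k. qmod (x k - y k) (of_nat p ^ k))"

text \<open>Least exponent e with p^e x in Z_p.\<close>
definition pden :: "nat \<Rightarrow> (nat \<Rightarrow> rat) \<Rightarrow> nat" where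
  "pden p x = (LEAST e. \<forall>k. \<exists>a::int. x k = of_int a / of_nat p ^ e)"

definition pmul :: "nat \<Rightarrow> (nat \<Rightarrow> rat) \<Rightarrow> (nat \<Rightarrow> rat) \<Rightarrow> nat \<Rightarrow> rat" where
  "pmul p x y = (\<lambda>k. let K = k + pden p x + pden p y
                     in qmod (x K * y K) (of_nat p ^ k))"

text \<open>x lies in p^j Z_p (j an integer).\<close>
definition in_pball :: "nat \<Rightarrow> int \<Rightarrow> (nat \<Rightarrow> rat) \<Rightarrow> bool" where
  "in_pball p j x \<longleftrightarrow> (\<forall>k. (int k \<le> j \<longrightarrow> x k = 0) \<and>
                              (\<exists>a::int. x k = of_int a * (of_nat p) powi j))"

definition pnorm :: "nat \<Rightarrow> (nat \<Rightarrow> rat) \<Rightarrow> real" where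
  "pnorm p x = Inf ((\<lambda>j. real p powr (- real_of_int j)) ` {j. in_pball p j x})"

definition pfrac :: "(nat \<Rightarrow> rat) \<Rightarrow> real" where
  "pfrac x = of_rat (x 0)"

definition chi :: "(nat \<Rightarrow> rat) \<Rightarrow> complex" where
  "chi y = exp (2 * of_real pi * \<i> * of_real (pfrac y))"

definition Qpn :: "nat \<Rightarrow> ('n \<Rightarrow> nat \<Rightarrow> rat) set" where
  "Qpn p = Pi UNIV (\<lambda>_. padic p)"

definition vnorm :: "nat \<Rightarrow> ('n::finite \<Rightarrow> nat \<Rightarrow> rat) \<Rightarrow> real" where
  "vnorm p x = Max (range (\<lambda>i. pnorm p (x i)))"

definition pdot :: "nat \<Rightarrow> ('n::finite \<Rightarrow> nat \<Rightarrow> rat) \<Rightarrow> ('n \<Rightarrow> nat \<Rightarrow> rat) \<Rightarrow> nat \<Rightarrow> rat" where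
  "pdot p \<xi> x = (\<lambda>k. qmod (\<Sum>i\<in>UNIV. pmul p (\<xi> i) (x i) k) (of_nat p ^ k))"

definition pballn :: "nat \<Rightarrow> ('n::finite \<Rightarrow> nat \<Rightarrow> rat) \<Rightarrow> int \<Rightarrow> ('n \<Rightarrow> nat \<Rightarrow> rat) set" where
  "pballn p c j = {x \<in> Qpn p. vnorm p (\<lambda>i. psub p (x i) (c i)) \<le> real p powr (- real_of_int j)}"

text \<open>Haar outer measure: infimum of total volumes of countable covers by balls,
  a ball of radius p^(-j) having volume p^(-j n); Z_p^n (j = 0) has volume 1.\<close>
definition haar_outer :: "nat \<Rightarrow> ('n::finite \<Rightarrow> nat \<Rightarrow> rat) set \<Rightarrow> ennreal" where
  "haar_outer p A =
     (INF C \<in> {C :: nat \<Rightarrow> ('n \<Rightarrow> nat \<Rightarrow> rat) \<times> int.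
                 (\<forall>m. fst (C m) \<in> Qpn p) \<and> A \<subseteq> (\<Union>m. pballn p (fst (C m)) (snd (C m)))}.
        \<Sum>m. ennreal (real p powr (- real CARD('n) * real_of_int (snd (C m)))))"

definition haar :: "nat \<Rightarrow> ('n::finite \<Rightarrow> nat \<Rightarrow> rat) measure" where
  "haar p = measure_of (Qpn p) {pballn p c j | c j. c \<in> Qpn p} (haar_outer p)"

definition fourierJ :: "nat \<Rightarrow> (real \<Rightarrow> real) \<Rightarrow> ('n::finite \<Rightarrow> nat \<Rightarrow> rat) \<Rightarrow> complex" where
  "fourierJ p J \<xi> = (\<integral>x. chi (pdot p \<xi> x) * complex_of_real (J (vnorm p x)) \<partial>haar p)"

end

theory Submission
  imports Defs
begin


definition mdv :: "rat \<Rightarrow> rat \<Rightarrow> bool" where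
  "mdv m a \<longleftrightarrow> (\<exists>z::int. a = of_int z * m)"

lemma mdv_add: "mdv m a \<Longrightarrow> mdv m b \<Longrightarrow> mdv m (a + b)"
  unfolding mdv_def by (metis distrib_right of_int_add)
lemma mdv_diff: "mdv m a \<Longrightarrow> mdv m b \<Longrightarrow> mdv m (a - b)"
  unfolding mdv_def by (metis left_diff_distrib of_int_diff)
lemma mdv_neg: "mdv m a \<Longrightarrow> mdv m (- a)"
  unfolding mdv_def by (metis minus_mult_left of_int_minus)
lemma mdv_0[simp]: "mdv m 0"
  unfolding mdv_def by (rule exI[of _ 0]) simp
lemma mdv_self: "mdv m m"
  unfolding mdv_def by (rule exI[of _ 1]) simp
lemma mdv_mult_int: "mdv m a \<Longrightarrow> mdv m (of_int z * a)"
  unfolding mdv_def by (metis mult.assoc of_int_mult)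
lemma mdv_trans: "mdv m a \<Longrightarrow> mdv m' m \<Longrightarrow> mdv m' a"
  unfolding mdv_def by (metis mult.assoc of_int_mult)
lemma mdv_sum: "(\<And>i. i \<in> S \<Longrightarrow> mdv m (f i)) \<Longrightarrow> mdv m (\<Sum>i\<in>S. f i)"
  by (induction S rule: infinite_finite_induct) (auto intro: mdv_add)

lemma qmod_bounds:
  assumes "m > 0" shows "0 \<le> qmod r m" "qmod r m < m"
proof -
  have a: "of_int \<lfloor>r/m\<rfloor> \<le> r/m" "r/m < of_int \<lfloor>r/m\<rfloor> + 1" by linarith+
  have "m * of_int \<lfloor>r/m\<rfloor> \<le> m * (r/m)" using a(1) assms by (intro mult_left_mono) auto
  then show "0 \<le> qmod r m" using assms by (simp add: qmod_def)
  have "m * (r/m) < m * (of_int \<lfloor>r/m\<rfloor> + 1)" using a(2) assms by (intro mult_strict_left_mono) auto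
  then show "qmod r m < m" using assms by (simp add: qmod_def algebra_simps)
qed

lemma qmod_mdv: "mdv m (r - qmod r m)"
  unfolding mdv_def qmod_def by (rule exI[of _ "\<lfloor>r/m\<rfloor>"]) simp

lemma qmod_unique:
  assumes "m > 0" "0 \<le> s" "s < m" "mdv m (r - s)" shows "qmod r m = s"
proof -
  obtain z where z: "r - s = of_int z * m" using assms(4) unfolding mdv_def by auto
  have "r / m = s / m + of_int z" using z assms(1) by (simp add: field_simps)
  moreover have "\<lfloor>s/m\<rfloor> = 0" using assms by (simp add: floor_eq_iff)
  ultimately have "\<lfloor>r/m\<rfloor> = z" by simp
  then show ?thesis using z by (simp add: qmod_def algebra_simps)
qed

lemma qmod_cong:
  assumes "m > 0" "mdv m (r - r')" shows "qmod r m = qmod r' m"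
  apply (rule qmod_unique[OF assms(1) qmod_bounds[OF assms(1)]])
  using mdv_add[OF assms(2) qmod_mdv[of m r']] by simp

lemma qmod_id: "m > 0 \<Longrightarrow> 0 \<le> r \<Longrightarrow> r < m \<Longrightarrow> qmod r m = r"
  by (rule qmod_unique) auto


lemma mdv_pow_le: "k \<le> k' \<Longrightarrow> mdv ((of_nat p::rat)^k) (of_nat p^k')"
  unfolding mdv_def by (rule exI[of _ "int p ^ (k'-k)"]) (simp add: power_add[symmetric])

lemma padicD:
  assumes "x \<in> padic p"
  shows "0 \<le> x k" "x k < of_nat p ^ k" "mdv (of_nat p ^ k) (x (Suc k) - x k)"
    "\<exists>e::nat. \<forall>k. \<exists>a::int. x k = of_int a / of_nat p ^ e"
  using assms unfolding padic_def mdv_def by auto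

lemma padic_compat:
  assumes "x \<in> padic p" "k \<le> k'" shows "mdv (of_nat p ^ k) (x k' - x k)"
  using assms(2)
proof (induction k' rule: dec_induct)
  case base then show ?case by simp
next
  case (step m)
  have "mdv (of_nat p ^ k) (x (Suc m) - x m)"
    using mdv_trans[OF padicD(3)[OF assms(1), of m] mdv_pow_le[OF step(1)]] .
  from mdv_add[OF this step(3)] show ?case by simp
qed

context fixes p :: nat assumes p2: "2 \<le> p" begin

lemma Ppos: "(0::rat) < of_nat p ^ k" using p2 by simp

lemma padic_res:
  assumes "x \<in> padic p" "k \<le> k'" shows "x k = qmod (x k') (of_nat p ^ k)"
  by (rule qmod_unique[symmetric]) (use Ppos padicD[OF assms(1)] padic_compat[OF assms] in auto)

lemma pden_prop:
  assumes "x \<in> padic p" shows "\<forall>k. \<exists>a::int. x k = of_int a / of_nat p ^ pden p x"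
  unfolding pden_def by (rule LeastI_ex) (use padicD(4)[OF assms] in auto)

lemma pden_le:
  assumes "\<forall>k. \<exists>a::int. x k = of_int a / of_nat p ^ e" shows "pden p x \<le> e"
  unfolding pden_def by (rule Least_le) (use assms in auto)

lemma powi_nonneg_eq: "(of_nat p::rat) powi (int J) = of_nat p ^ J"
  by (simp add: power_int_def)

lemma mdv_powi_le:
  assumes "j' \<le> j" shows "mdv ((of_nat p::rat) powi j') (of_nat p powi j)"
proof -
  have "(of_nat p::rat) powi j = of_nat p powi (j - j') * of_nat p powi j'"
    using p2 by (simp add: power_int_add[symmetric])
  also have "(of_nat p::rat) powi (j - j') = of_int (int p ^ nat (j - j'))"
    using assms by (simp add: power_int_def)
  finally show ?thesis unfolding mdv_def by blast
qed

lemma ip_mono: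
  assumes "in_pball p j x" "j' \<le> j" shows "in_pball p j' x"
  using assms mdv_trans[OF _ mdv_powi_le[OF assms(2)]] unfolding in_pball_def mdv_def[symmetric]
  by auto

lemma ip_nonneg:
  assumes "x \<in> padic p" shows "in_pball p (int J) x \<longleftrightarrow> x J = 0"
proof
  assume "in_pball p (int J) x" then show "x J = 0" unfolding in_pball_def by auto
next
  assume h: "x J = 0"
  have "mdv (of_nat p powi int J) (x k)" for k
  proof (cases "k \<le> J")
    case True
    then have "x k = qmod (x J) (of_nat p ^ k)" using padic_res[OF assms True] by simp
    also have "\<dots> = 0" using h by (simp add: qmod_def)
    finally show ?thesis by simp
  next
    case False
    then show ?thesis using padic_compat[OF assms, of J k] h by (simp add: powi_nonneg_eq)
  qed
  moreover have "int k \<le> int J \<Longrightarrow> x k = 0" for k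
    using padic_res[OF assms, of k J] h by (simp add: qmod_def)
  ultimately show "in_pball p (int J) x" unfolding in_pball_def mdv_def by auto
qed

lemma mdv_int_powi_neg:
  assumes "j \<le> 0" shows "mdv ((of_nat p::rat) powi j) 1"
  using mdv_powi_le[OF assms] by simp

lemma ip_neg:
  assumes "x \<in> padic p" "j < 0" shows "in_pball p j x \<longleftrightarrow> mdv (of_nat p powi j) (x 0)"
proof
  assume "in_pball p j x" then show "mdv (of_nat p powi j) (x 0)" unfolding in_pball_def mdv_def by auto
next
  assume h: "mdv (of_nat p powi j) (x 0)"
  have "mdv (of_nat p powi j) (x k)" for k
  proof -
    obtain z where z: "x k - x 0 = of_int z" using padic_compat[OF assms(1), of 0 k] unfolding mdv_def by auto
    have "mdv (of_nat p powi j) (of_int z)"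
      using mdv_mult_int[OF mdv_int_powi_neg[of j], of z] assms(2) by simp
    from mdv_add[OF h this] z show ?thesis by (simp add: algebra_simps)
  qed
  then show "in_pball p j x" using assms(2) unfolding in_pball_def mdv_def by auto
qed

lemma ip_exists:
  assumes "x \<in> padic p" shows "\<exists>j. in_pball p j x"
proof -
  obtain e where e: "\<forall>k. \<exists>a::int. x k = of_int a / of_nat p ^ e" using padicD(4)[OF assms] by blast
  have pw: "(of_nat p::rat) powi (- int (Suc e)) = 1 / (of_nat p ^ e * of_nat p)"
    by (simp add: power_int_def nat_add_distrib power_inverse field_simps)
  have "mdv (of_nat p powi (- int (Suc e))) (x k)" for k
  proof -
    obtain a where a: "x k = of_int a / of_nat p ^ e" using e by blast
    have "x k = of_int (a * int p) * (1 / (of_nat p ^ e * of_nat p))"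
      using a p2 by (simp add: field_simps)
    then show ?thesis unfolding mdv_def pw by blast
  qed
  then show ?thesis unfolding in_pball_def mdv_def
    by (intro exI[of _ "- int (Suc e)"]) auto
qed


lemma Rpow_pos: "0 < real p powr r" using p2 by simp

lemma pnorm_le_iff:
  assumes "x \<in> padic p"
  shows "pnorm p x \<le> real p powr (- real_of_int j) \<longleftrightarrow> in_pball p j x"
proof
  assume "in_pball p j x"
  then show "pnorm p x \<le> real p powr (- real_of_int j)" unfolding pnorm_def
    by (intro cInf_lower) (auto intro!: bdd_belowI[of _ 0])
next
  assume h: "pnorm p x \<le> real p powr (- real_of_int j)"
  show "in_pball p j x"
  proof (rule ccontr)
    assume nj: "\<not> in_pball p j x"
    have "real p * real p powr (- real_of_int j) \<le> pnorm p x" unfolding pnorm_def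
    proof (rule cInf_greatest)
      show "(\<lambda>j. real p powr - real_of_int j) ` {j. in_pball p j x} \<noteq> {}" using ip_exists[OF assms] by auto
    next
      fix y assume "y \<in> (\<lambda>j. real p powr - real_of_int j) ` {j. in_pball p j x}"
      then obtain j' where j': "in_pball p j' x" "y = real p powr - real_of_int j'" by auto
      have "j' < j" using ip_mono[OF j'(1), of j] nj by (meson not_le order_less_imp_le)
      then have "- real_of_int j + 1 \<le> - real_of_int j'" by linarith
      then have "real p powr (- real_of_int j + 1) \<le> real p powr (- real_of_int j')"
        using p2 by (intro powr_mono) auto
      moreover have "real p powr (- real_of_int j + 1) = real p * real p powr (- real_of_int j)"
        using p2 powr_add[of "real p" "- real_of_int j" 1] by (simp add: mult.commute)
      ultimately show "real p * real p powr - real_of_int j \<le> y" using j'(2) by simp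
    qed
    moreover have "real p powr (- real_of_int j) < real p * real p powr (- real_of_int j)"
      using p2 Rpow_pos[of "- real_of_int j"] by simp
    ultimately show False using h by linarith
  qed
qed

lemma pnorm_nonneg: assumes "x \<in> padic p" shows "0 \<le> pnorm p x"
  unfolding pnorm_def by (rule cInf_greatest) (use ip_exists[OF assms] in auto)

lemma pnorm_pos: assumes "x \<in> padic p" "x \<noteq> pzero" shows "0 < pnorm p x"
proof (rule ccontr)
  assume "\<not> 0 < pnorm p x"
  then have "in_pball p (int k) x" for k
    using pnorm_le_iff[OF assms(1), of "int k"] Rpow_pos[of "- real k"] by simp
  then have "x k = 0" for k using ip_nonneg[OF assms(1)] by blast
  then show False using assms(2) unfolding pzero_def by auto
qed

lemma Qpn_iff: "x \<in> Qpn p \<longleftrightarrow> (\<forall>i. x i \<in> padic p)"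
  unfolding Qpn_def by auto

lemma vnorm_ge: "pnorm p (x i) \<le> vnorm p (x::'n::finite \<Rightarrow> nat \<Rightarrow> rat)"
  unfolding vnorm_def by (rule Max_ge) auto

lemma vnorm_le_iff:
  assumes "(x::'n::finite \<Rightarrow> nat \<Rightarrow> rat) \<in> Qpn p"
  shows "vnorm p x \<le> real p powr (- real_of_int j) \<longleftrightarrow> (\<forall>i. in_pball p j (x i))"
  unfolding vnorm_def using assms pnorm_le_iff by (auto simp: Qpn_iff)

lemma vnorm_nonneg: "(x::'n::finite \<Rightarrow> nat \<Rightarrow> rat) \<in> Qpn p \<Longrightarrow> 0 \<le> vnorm p x"
  using vnorm_ge[of x] pnorm_nonneg by (meson Qpn_iff order_trans)

lemma vnorm_pos: "(x::'n::finite \<Rightarrow> nat \<Rightarrow> rat) \<in> Qpn p \<Longrightarrow> x \<noteq> (\<lambda>i. pzero) \<Longrightarrow> 0 < vnorm p x"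
  using vnorm_ge[of x] pnorm_pos by (meson Qpn_iff order_less_le_trans)


definition den :: "nat \<Rightarrow> rat \<Rightarrow> bool" where
  "den e r \<longleftrightarrow> mdv (1 / of_nat p ^ e) r"

lemma den_iff: "den e r \<longleftrightarrow> (\<exists>a::int. r = of_int a / of_nat p ^ e)"
  unfolding den_def mdv_def by (auto simp: field_simps)

lemma den_mono: assumes "den e r" "e \<le> e'" shows "den e' r"
proof -
  obtain a where a: "r = of_int a / of_nat p ^ e" using assms(1) den_iff by blast
  have pe: "(of_nat p::rat) ^ e' = of_nat p ^ e * of_nat p ^ (e' - e)"
    using assms(2) by (simp add: power_add[symmetric])
  have "r = of_int (a * int p ^ (e' - e)) / of_nat p ^ e'"
    unfolding a pe using p2 by simp
  then show ?thesis using den_iff by blast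
qed

lemma den_add: "den e r \<Longrightarrow> den e s \<Longrightarrow> den e (r + s)"
  unfolding den_def by (rule mdv_add)
lemma den_diff: "den e r \<Longrightarrow> den e s \<Longrightarrow> den e (r - s)"
  unfolding den_def by (rule mdv_diff)
lemma den_int: "den e (of_int z)"
  unfolding den_iff using p2 by (auto intro!: exI[of _ "z * int p ^ e"] simp: field_simps)
lemma den_mdv: "mdv (of_nat p ^ k) r \<Longrightarrow> den e r"
  unfolding mdv_def using den_int by (metis of_int_mult of_int_of_nat_eq of_nat_power)

lemma padicI:
  assumes "\<And>k. 0 \<le> y k" "\<And>k. y k < of_nat p ^ k" "\<And>k. mdv (of_nat p ^ k) (y (Suc k) - y k)"
    "\<And>k. den e (y k)"
  shows "y \<in> padic p"
proof -
  have "\<forall>k. \<exists>a::int. y k = of_int a / of_nat p ^ e" using assms(4) den_iff by blast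
  then show ?thesis using assms(1,2) assms(3)[unfolded mdv_def] unfolding padic_def by fast
qed

lemma padic_den: "x \<in> padic p \<Longrightarrow> \<exists>e. \<forall>k. den e (x k)"
  using padicD(4) den_iff by blast

lemma padic_comb:
  assumes x: "x \<in> padic p" and c: "c \<in> padic p"
  shows "(\<lambda>k. qmod (x k + of_int s * c k) (of_nat p ^ k)) \<in> padic p"
proof -
  define y where "y = (\<lambda>k. qmod (x k + of_int s * c k) (of_nat p ^ k))"
  obtain e1 where e1: "\<And>k. den e1 (x k)" using padic_den[OF x] by blast
  obtain e2 where e2: "\<And>k. den e2 (c k)" using padic_den[OF c] by blast
  have "y \<in> padic p"
  proof (rule padicI)
    fix k
    show "0 \<le> y k" "y k < of_nat p ^ k" unfolding y_def using qmod_bounds[OF Ppos] by auto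
    have m1: "mdv (of_nat p ^ k) ((x (Suc k) + of_int s * c (Suc k)) - y (Suc k))"
      unfolding y_def using mdv_trans[OF qmod_mdv mdv_pow_le[of k "Suc k"]] by simp
    have m2: "mdv (of_nat p ^ k) ((x k + of_int s * c k) - y k)"
      unfolding y_def by (rule qmod_mdv)
    have m3: "mdv (of_nat p ^ k) (x (Suc k) - x k)" using padicD(3)[OF x] .
    have m4: "mdv (of_nat p ^ k) (of_int s * (c (Suc k) - c k))" using mdv_mult_int[OF padicD(3)[OF c]] .
    have eq: "y (Suc k) - y k = (x (Suc k) - x k) + of_int s * (c (Suc k) - c k)
        - ((x (Suc k) + of_int s * c (Suc k)) - y (Suc k)) + ((x k + of_int s * c k) - y k)"
      by (simp add: algebra_simps)
    show "mdv (of_nat p ^ k) (y (Suc k) - y k)"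
      unfolding eq by (rule mdv_add[OF mdv_diff[OF mdv_add[OF m3 m4] m1] m2])
    have "den (e1 + e2) (x k + of_int s * c k)"
      using den_mono[OF e1, of "e1+e2"] den_mono[OF e2, of "e1+e2"]
      by (intro den_add) (auto simp: den_def intro: mdv_mult_int)
    moreover have "den (e1+e2) ((x k + of_int s * c k) - y k)" using den_mdv[OF m2] .
    ultimately show "den (e1 + e2) (y k)" using den_diff by fastforce
  qed
  then show ?thesis unfolding y_def .
qed

lemma psub_padic: "x \<in> padic p \<Longrightarrow> c \<in> padic p \<Longrightarrow> psub p x c \<in> padic p"
  using padic_comb[of x c "-1"] unfolding psub_def by simp
lemma padd_padic: "x \<in> padic p \<Longrightarrow> c \<in> padic p \<Longrightarrow> padd p x c \<in> padic p"
  using padic_comb[of x c "1"] unfolding padd_def by simp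

lemma pzero_padic: "pzero \<in> padic p"
  unfolding padic_def pzero_def using p2 by (auto intro!: exI[of _ 0])

lemma zero_Qpn: "(\<lambda>i. pzero) \<in> Qpn p" unfolding Qpn_iff using pzero_padic by simp

lemma eq_mod: "m > 0 \<Longrightarrow> 0 \<le> a \<Longrightarrow> a < m \<Longrightarrow> 0 \<le> b \<Longrightarrow> b < m \<Longrightarrow> mdv m (a - b) \<Longrightarrow> a = b"
  using qmod_cong[of m a b] qmod_id[of m a] qmod_id[of m b] by auto

lemma psub_zero: "x \<in> padic p \<Longrightarrow> psub p x pzero = x"
  unfolding psub_def pzero_def using padicD(1,2) qmod_id[OF Ppos] by fastforce

lemma pballn_iff:
  "x \<in> pballn p c j \<longleftrightarrow> x \<in> Qpn p \<and> (\<forall>i. in_pball p j (psub p (x i) (c i)))" if "c \<in> Qpn p"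
proof -
  have "x \<in> Qpn p \<Longrightarrow> (\<lambda>i. psub p (x i) (c i)) \<in> Qpn p" using that psub_padic by (auto simp: Qpn_iff)
  then show ?thesis unfolding pballn_def using vnorm_le_iff by auto
qed

lemma pballn_nat_iff:
  "x \<in> pballn p c (int J) \<longleftrightarrow> x \<in> Qpn p \<and> (\<forall>i. x i J = c i J)" if c: "c \<in> Qpn p"
proof -
  have "psub p (x i) (c i) J = 0 \<longleftrightarrow> x i J = c i J" if x: "x \<in> Qpn p" for i
  proof -
    have xi: "x i \<in> padic p" and ci: "c i \<in> padic p" using x c by (auto simp: Qpn_iff)
    show ?thesis
    proof
      assume "psub p (x i) (c i) J = 0"
      then have "mdv (of_nat p ^ J) (x i J - c i J)" using qmod_mdv[of "of_nat p ^ J" "x i J - c i J"]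
        unfolding psub_def by simp
      then show "x i J = c i J" using eq_mod[OF Ppos] padicD(1,2)[OF xi] padicD(1,2)[OF ci] by blast
    qed (simp add: psub_def qmod_def)
  qed
  then show ?thesis using ip_nonneg psub_padic c unfolding pballn_iff[OF c] by (auto simp: Qpn_iff)
qed

definition S :: "int \<Rightarrow> ('n::finite \<Rightarrow> nat \<Rightarrow> rat) set" where
  "S j = pballn p (\<lambda>i. pzero) j"

lemma S_iff: "x \<in> S j \<longleftrightarrow> x \<in> Qpn p \<and> (\<forall>i. in_pball p j (x i))"
  unfolding S_def pballn_iff[OF zero_Qpn] using psub_zero by (auto simp: Qpn_iff)

lemma S_vnorm: "x \<in> S j \<longleftrightarrow> x \<in> Qpn p \<and> vnorm p x \<le> real p powr (- real_of_int j)"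
  using S_iff vnorm_le_iff by blast

lemma S_mono: "j' \<le> j \<Longrightarrow> S j \<subseteq> S j'"
  by (auto simp: S_iff) (meson ip_mono)

lemma zero_S: "(\<lambda>i. pzero) \<in> S j"
  unfolding S_iff using zero_Qpn by (auto simp: in_pball_def pzero_def)

lemma Qpn_Union_S: "(Qpn p :: ('n::finite \<Rightarrow> nat \<Rightarrow> rat) set) = (\<Union>k::nat. S (- int k))"
proof safe
  fix x :: "'n \<Rightarrow> nat \<Rightarrow> rat" assume x: "x \<in> Qpn p"
  have "\<exists>j. in_pball p j (x i)" for i using ip_exists x by (auto simp: Qpn_iff)
  then obtain jf where jf: "\<And>i. in_pball p (jf i) (x i)" by metis
  define k where "k = nat (- Min (range jf))"
  have "- int k \<le> jf i" for i
  proof -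
    have "Min (range jf) \<le> jf i" by (rule Min_le) (simp_all add: finite_imageI)
    then show ?thesis unfolding k_def by linarith
  qed
  then have "x \<in> S (- int k)" using jf ip_mono x unfolding S_iff by blast
  then show "x \<in> (\<Union>k. S (- int k))" by blast
qed (auto simp: S_iff)

end


context fixes p :: nat assumes p2: "2 \<le> p" begin

lemma gens_Pow: "{pballn p c j | c j. c \<in> Qpn p} \<subseteq> Pow (Qpn p)"
  unfolding pballn_def by auto

lemma space_haar: "space (haar p) = Qpn p"
  unfolding haar_def using space_measure_of[OF gens_Pow] .

lemma sets_haar: "sets (haar p) = sigma_sets (Qpn p) {pballn p c j | c j. c \<in> Qpn p}"
  unfolding haar_def using sets_measure_of[OF gens_Pow] .

lemma pballn_sets: "c \<in> Qpn p \<Longrightarrow> pballn p c j \<in> sets (haar p)"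
  unfolding sets_haar by (rule sigma_sets.Basic) blast

lemma S_sets: "S p j \<in> sets (haar p)"
  unfolding S_def[OF p2] using pballn_sets[OF zero_Qpn[OF p2]] .

lemma haar_degenerate:
  assumes "\<not> measure_space (Qpn p) (sets (haar p :: ('n::finite \<Rightarrow> nat \<Rightarrow> rat) measure)) (haar_outer p)"
  shows "emeasure (haar p :: ('n::finite \<Rightarrow> nat \<Rightarrow> rat) measure) A = 0"
  using assms unfolding sets_haar unfolding haar_def emeasure_measure_of_conv by auto

lemma haar_emeasure:
  assumes "measure_space (Qpn p) (sets (haar p :: ('n::finite \<Rightarrow> nat \<Rightarrow> rat) measure)) (haar_outer p)"
    "A \<in> sets (haar p :: ('n::finite \<Rightarrow> nat \<Rightarrow> rat) measure)"
  shows "emeasure (haar p :: ('n::finite \<Rightarrow> nat \<Rightarrow> rat) measure) A = haar_outer p A"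
  using assms unfolding sets_haar unfolding haar_def emeasure_measure_of_conv by auto

lemma haar_outer_mono: "A \<subseteq> B \<Longrightarrow> haar_outer p A \<le> haar_outer p B"
  unfolding haar_outer_def by (rule INF_superset_mono) auto

lemma haar_outer_le:
  assumes "\<forall>m. fst (C m) \<in> Qpn p" "A \<subseteq> (\<Union>m. pballn p (fst (C m)) (snd (C m)))"
  shows "haar_outer p (A :: ('n::finite \<Rightarrow> nat \<Rightarrow> rat) set) \<le> (\<Sum>m. ennreal (real p powr (- real CARD('n) * real_of_int (snd (C m)))))"
  unfolding haar_outer_def by (rule INF_lower) (use assms in auto)

lemma haar_outer_ge:
  assumes "\<And>C. \<forall>m. fst (C m) \<in> Qpn p \<Longrightarrow> A \<subseteq> (\<Union>m. pballn p (fst (C m)) (snd (C m))) \<Longrightarrow>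
     x \<le> (\<Sum>m. ennreal (real p powr (- real CARD('n) * real_of_int (snd (C m)))))"
  shows "x \<le> haar_outer p (A :: ('n::finite \<Rightarrow> nat \<Rightarrow> rat) set)"
  unfolding haar_outer_def by (rule INF_greatest) (use assms in auto)

definition Dp :: "(nat \<Rightarrow> rat) \<Rightarrow> nat \<Rightarrow> rat" where
  "Dp y = (\<lambda>k. y (Suc k) / of_nat p)"

definition Ep :: "(nat \<Rightarrow> rat) \<Rightarrow> nat \<Rightarrow> rat" where
  "Ep y = (\<lambda>k. if k = 0 then qmod (of_nat p * y 0) 1 else of_nat p * y (k - 1))"

lemma Pgt0: "(0::rat) < of_nat p" using p2 by simp

lemma D_padic: assumes y: "y \<in> padic p" shows "Dp y \<in> padic p"
proof -
  obtain e where e: "\<And>k. den p e (y k)" using padic_den[OF p2 y] by blast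
  show ?thesis
  proof (rule padicI[OF p2])
    fix k
    show "0 \<le> Dp y k" using padicD(1)[OF y] Pgt0 unfolding Dp_def by simp
    show "Dp y k < of_nat p ^ k" using padicD(2)[OF y, of "Suc k"] Pgt0 unfolding Dp_def
      by (simp add: divide_less_eq mult.commute)
    obtain z where z: "y (Suc (Suc k)) - y (Suc k) = of_int z * of_nat p ^ Suc k"
      using padicD(3)[OF y, of "Suc k"] unfolding mdv_def by blast
    have "Dp y (Suc k) - Dp y k = of_int z * of_nat p ^ k" unfolding Dp_def
      using z Pgt0 by (simp add: field_simps diff_divide_distrib[symmetric])
    then show "mdv (of_nat p ^ k) (Dp y (Suc k) - Dp y k)" unfolding mdv_def by blast
    obtain a where a: "y (Suc k) = of_int a / of_nat p ^ e" using e den_iff[OF p2] by blast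
    have "Dp y k = of_int a / of_nat p ^ Suc e" unfolding Dp_def a by (simp add: field_simps)
    then show "den p (Suc e) (Dp y k)" using den_iff[OF p2] by blast
  qed
qed

lemma E_padic: assumes y: "y \<in> padic p" shows "Ep y \<in> padic p"
proof -
  obtain e where e: "\<And>k. den p e (y k)" using padic_den[OF p2 y] by blast
  show ?thesis
  proof (rule padicI[OF p2])
    fix k
    show "0 \<le> Ep y k" using padicD(1)[OF y] qmod_bounds[of 1] Pgt0 unfolding Ep_def by simp
    show "Ep y k < of_nat p ^ k"
    proof (cases k)
      case 0 then show ?thesis using qmod_bounds[of 1] unfolding Ep_def by simp
    next
      case (Suc k') then show ?thesis using padicD(2)[OF y, of k'] Pgt0 unfolding Ep_def by simp
    qed
    show "mdv (of_nat p ^ k) (Ep y (Suc k) - Ep y k)"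
    proof (cases k)
      case 0 then show ?thesis using qmod_mdv[of 1 "of_nat p * y 0"] unfolding Ep_def by simp
    next
      case (Suc k')
      obtain z where z: "y (Suc k') - y k' = of_int z * of_nat p ^ k'"
        using padicD(3)[OF y, of k'] unfolding mdv_def by blast
      have "Ep y (Suc k) - Ep y k = of_int z * of_nat p ^ k" unfolding Ep_def using Suc z
        by (simp add: algebra_simps)
      then show ?thesis unfolding mdv_def by blast
    qed
    have dpy: "den p e (of_nat p * y j)" for j
      using e[of j] mdv_mult_int[of _ "y j" "int p"] unfolding den_def[OF p2] by simp
    show "den p e (Ep y k)"
    proof (cases k)
      case 0
      have "mdv (of_nat p ^ 0) (of_nat p * y 0 - qmod (of_nat p * y 0) 1)" using qmod_mdv[of 1] by simp
      from den_diff[OF p2 dpy den_mdv[OF p2 this]]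
      have "den p e (of_nat p * y 0 - (of_nat p * y 0 - qmod (of_nat p * y 0) 1))" .
      then show ?thesis unfolding Ep_def using 0 by simp
    qed (use dpy in \<open>simp add: Ep_def\<close>)
  qed
qed

lemma DE: "Dp (Ep y) = y"
  unfolding Dp_def Ep_def using Pgt0 by auto

lemma qmod_div: assumes "m > 0" "d > 0" shows "qmod (r / d) m = qmod r (m * d) / d"
proof (rule qmod_unique[OF assms(1)])
  have b: "0 \<le> qmod r (m*d)" "qmod r (m*d) < m * d" using qmod_bounds[of "m*d" r] assms by auto
  show "0 \<le> qmod r (m * d) / d" using b assms by simp
  show "qmod r (m * d) / d < m" using b assms by (simp add: divide_less_eq)
  obtain z where "r - qmod r (m*d) = of_int z * (m * d)" using qmod_mdv[of "m*d" r] unfolding mdv_def by blast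
  then have "r / d - qmod r (m * d) / d = of_int z * m" using assms
    by (simp add: diff_divide_distrib[symmetric] field_simps)
  then show "mdv m (r / d - qmod r (m * d) / d)" unfolding mdv_def by blast
qed

lemma psub_D: "psub p (Dp x) (Dp c) = Dp (psub p x c)"
proof
  fix k
  have "psub p (Dp x) (Dp c) k = qmod ((x (Suc k) - c (Suc k)) / of_nat p) (of_nat p ^ k)"
    unfolding psub_def Dp_def by (simp add: diff_divide_distrib)
  also have "\<dots> = Dp (psub p x c) k"
    unfolding Dp_def psub_def using qmod_div[OF Ppos[OF p2] Pgt0] by (simp add: mult.commute)
  finally show "psub p (Dp x) (Dp c) k = Dp (psub p x c) k" .
qed

lemma ip_D: assumes "in_pball p j y" shows "in_pball p (j - 1) (Dp y)"
proof -
  have "(of_nat p::rat) powi j = of_nat p powi (j - 1) * of_nat p"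
    using Pgt0 power_int_add[of "of_nat p::rat" "j - 1" 1] by simp
  then show ?thesis using assms Pgt0 unfolding in_pball_def Dp_def
    by (auto simp: field_simps)
qed


lemma mdv_int1: "mdv 1 r \<Longrightarrow> j \<le> 0 \<Longrightarrow> mdv ((of_nat p::rat) powi j) r"
  using mdv_trans mdv_int_powi_neg[OF p2] by blast

lemma ip_E: assumes y: "y \<in> padic p" and h: "in_pball p j y" shows "in_pball p (j + 1) (Ep y)"
proof -
  have pj: "(of_nat p::rat) powi (j + 1) = of_nat p * of_nat p powi j"
    using Pgt0 power_int_add[of "of_nat p::rat" j 1] by (simp add: mult.commute)
  have hz: "\<And>k. int k \<le> j \<Longrightarrow> y k = 0" and hm: "\<And>k. mdv (of_nat p powi j) (y k)"
    using h unfolding in_pball_def mdv_def by auto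
  have mP: "mdv (of_nat p powi (j+1)) (of_nat p * y k)" for k
    using hm[of k] unfolding mdv_def pj by (auto simp: algebra_simps)
  have "(int k \<le> j + 1 \<longrightarrow> Ep y k = 0) \<and> mdv (of_nat p powi (j+1)) (Ep y k)" for k
  proof (cases k)
    case 0
    show ?thesis
    proof (cases "0 \<le> j + 1")
      case True
      have "mdv 1 (of_nat p * y 0)"
        using mP[of 0] mdv_trans[OF _ mdv_powi_le[OF p2 True]] by simp
      then have "qmod (of_nat p * y 0) 1 = 0" by (intro qmod_unique) auto
      then show ?thesis using 0 by (simp add: Ep_def)
    next
      case False
      have "mdv (of_nat p powi (j+1)) (of_nat p * y 0 - qmod (of_nat p * y 0) 1)"
        using mdv_int1[OF qmod_mdv] False by simp
      from mdv_diff[OF mP[of 0] this] show ?thesis using 0 False by (simp add: Ep_def)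
    qed
  next
    case (Suc k')
    then show ?thesis using hz[of k'] mP[of k'] by (simp add: Ep_def)
  qed
  then show ?thesis unfolding in_pball_def mdv_def by blast
qed

definition Dv :: "('n \<Rightarrow> nat \<Rightarrow> rat) \<Rightarrow> 'n \<Rightarrow> nat \<Rightarrow> rat" where
  "Dv x = (\<lambda>i. Dp (x i))"

lemma Dv_Qpn: "x \<in> Qpn p \<Longrightarrow> Dv x \<in> Qpn p"
  unfolding Dv_def Qpn_iff[OF p2] using D_padic by auto

lemma S_sub_D: "S p j \<subseteq> Dv ` S p (j+1)"
proof
  fix x :: "'n::finite \<Rightarrow> nat \<Rightarrow> rat" assume x: "x \<in> S p j"
  define y where "y = (\<lambda>i. Ep (x i))"
  have "y \<in> S p (j+1)" using x unfolding S_iff[OF p2] y_def Qpn_iff[OF p2] using E_padic ip_E by auto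
  moreover have "x = Dv y" unfolding y_def Dv_def DE by simp
  ultimately show "x \<in> Dv ` S p (j+1)" by blast
qed

lemma D_ball: assumes c: "c \<in> Qpn p" and x: "x \<in> pballn p c j" shows "Dv x \<in> pballn p (Dv c) (j - 1)"
  using x Dv_Qpn[OF c] Dv_Qpn ip_D unfolding pballn_iff[OF p2 c] pballn_iff[OF p2 Dv_Qpn[OF c]]
  by (auto simp: Dv_def psub_D)

lemma haar_outer_scale:
  "ennreal (real p powr (- real CARD('n))) * haar_outer p (Dv ` A) \<le> haar_outer p (A :: ('n::finite \<Rightarrow> nat \<Rightarrow> rat) set)"
proof (rule haar_outer_ge)
  fix C :: "nat \<Rightarrow> ('n \<Rightarrow> nat \<Rightarrow> rat) \<times> int"
  assume C: "\<forall>m. fst (C m) \<in> Qpn p" "A \<subseteq> (\<Union>m. pballn p (fst (C m)) (snd (C m)))"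
  define C' where "C' = (\<lambda>m. (Dv (fst (C m)), snd (C m) - 1))"
  have "\<forall>m. fst (C' m) \<in> Qpn p" using C(1) Dv_Qpn unfolding C'_def by auto
  moreover have "Dv ` A \<subseteq> (\<Union>m. pballn p (fst (C' m)) (snd (C' m)))"
    using C D_ball unfolding C'_def by fastforce
  ultimately have "haar_outer p (Dv ` A) \<le> (\<Sum>m. ennreal (real p powr (- real CARD('n) * real_of_int (snd (C' m)))))"
    by (rule haar_outer_le)
  then have "ennreal (real p powr (- real CARD('n))) * haar_outer p (Dv ` A) \<le>
     ennreal (real p powr (- real CARD('n))) * (\<Sum>m. ennreal (real p powr (- real CARD('n) * real_of_int (snd (C' m)))))"
    by (rule mult_left_mono) simp
  also have "\<dots> = (\<Sum>m. ennreal (real p powr (- real CARD('n))) * ennreal (real p powr (- real CARD('n) * real_of_int (snd (C' m)))))"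
    by simp
  also have "\<dots> = (\<Sum>m. ennreal (real p powr (- real CARD('n) * real_of_int (snd (C m)))))"
  proof (rule suminf_cong)
    fix m
    have "real p powr (- real CARD('n)) * real p powr (- real CARD('n) * real_of_int (snd (C' m)))
        = real p powr (- real CARD('n) * real_of_int (snd (C m)))"
      unfolding C'_def by (simp add: powr_add[symmetric] algebra_simps)
    then show "ennreal (real p powr (- real CARD('n))) * ennreal (real p powr (- real CARD('n) * real_of_int (snd (C' m))))
        = ennreal (real p powr (- real CARD('n) * real_of_int (snd (C m))))"
      by (simp add: ennreal_mult[symmetric])
  qed
  finally show "ennreal (real p powr (- real CARD('n))) * haar_outer p (Dv ` A) \<le> (\<Sum>m. ennreal (real p powr (- real CARD('n) * real_of_int (snd (C m)))))" .
qed

lemma haar_outer_S_step: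
  "ennreal (real p powr (- real CARD('n))) * haar_outer p (S p j :: ('n::finite \<Rightarrow> nat \<Rightarrow> rat) set) \<le> haar_outer p (S p (j+1) :: ('n \<Rightarrow> nat \<Rightarrow> rat) set)"
proof -
  have "haar_outer p (S p j :: ('n \<Rightarrow> nat \<Rightarrow> rat) set) \<le> haar_outer p (Dv ` S p (j+1) :: ('n \<Rightarrow> nat \<Rightarrow> rat) set)"
    by (rule haar_outer_mono[OF S_sub_D])
  then show ?thesis using haar_outer_scale[of "S p (j+1)"] by (meson mult_left_mono order_trans zero_le)
qed

end


context fixes p :: nat assumes p2: "2 \<le> p" begin

lemma haar_outer_image:
  fixes f :: "('n::finite \<Rightarrow> nat \<Rightarrow> rat) \<Rightarrow> ('n \<Rightarrow> nat \<Rightarrow> rat)"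
  assumes f: "\<And>c. c \<in> Qpn p \<Longrightarrow> f c \<in> Qpn p"
    and fb: "\<And>c j x. c \<in> Qpn p \<Longrightarrow> x \<in> pballn p c j \<Longrightarrow> f x \<in> pballn p (f c) j"
  shows "haar_outer p (f ` A) \<le> haar_outer p (A :: ('n::finite \<Rightarrow> nat \<Rightarrow> rat) set)"
proof (rule haar_outer_ge[OF p2])
  fix C :: "nat \<Rightarrow> ('n \<Rightarrow> nat \<Rightarrow> rat) \<times> int"
  assume C: "\<forall>m. fst (C m) \<in> Qpn p" "A \<subseteq> (\<Union>m. pballn p (fst (C m)) (snd (C m)))"
  define C' where "C' = (\<lambda>m. (f (fst (C m)), snd (C m)))"
  have "\<forall>m. fst (C' m) \<in> Qpn p" using C(1) f unfolding C'_def by auto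
  moreover have "f ` A \<subseteq> (\<Union>m. pballn p (fst (C' m)) (snd (C' m)))"
    using C fb unfolding C'_def by fastforce
  ultimately have "haar_outer p (f ` A) \<le> (\<Sum>m. ennreal (real p powr (- real CARD('n) * real_of_int (snd (C' m)))))"
    by (rule haar_outer_le[OF p2])
  then show "haar_outer p (f ` A) \<le> (\<Sum>m. ennreal (real p powr (- real CARD('n) * real_of_int (snd (C m)))))"
    unfolding C'_def by simp
qed

lemma qmod_P_cong: "mdv (of_nat p ^ k) (r - r') \<Longrightarrow> qmod r (of_nat p ^ k) = qmod r' (of_nat p ^ k)"
  by (rule qmod_cong[OF Ppos[OF p2]])

lemma qm: "mdv (of_nat p ^ k) (r - qmod r (of_nat p ^ k))" by (rule qmod_mdv)

lemma psub_padd_cancel: assumes "x \<in> padic p" shows "psub p (padd p x a) a = x"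
proof
  fix k
  have "psub p (padd p x a) a k = qmod (x k) (of_nat p ^ k)" unfolding psub_def padd_def
    by (rule qmod_P_cong) (use mdv_neg[OF qm[of k "x k + a k"]] in \<open>simp add: algebra_simps\<close>)
  also have "\<dots> = x k" using qmod_id[OF Ppos[OF p2]] padicD(1,2)[OF assms] by blast
  finally show "psub p (padd p x a) a k = x k" .
qed

lemma psub_padd2: "psub p (padd p x a) (padd p c a) = psub p x c"
proof
  fix k
  show "psub p (padd p x a) (padd p c a) k = psub p x c k" unfolding psub_def padd_def
    by (rule qmod_P_cong) (use mdv_diff[OF qm[of k "c k + a k"] qm[of k "x k + a k"]] in \<open>simp add: algebra_simps\<close>)
qed

lemma psub_psub2: "psub p (psub p x a) (psub p c a) = psub p x c"
proof
  fix k
  show "psub p (psub p x a) (psub p c a) k = psub p x c k" unfolding psub_def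
    by (rule qmod_P_cong) (use mdv_diff[OF qm[of k "c k - a k"] qm[of k "x k - a k"]] in \<open>simp add: algebra_simps\<close>)
qed

definition Tr :: "('n \<Rightarrow> nat \<Rightarrow> rat) \<Rightarrow> ('n \<Rightarrow> nat \<Rightarrow> rat) \<Rightarrow> 'n \<Rightarrow> nat \<Rightarrow> rat" where
  "Tr a x = (\<lambda>i. padd p (x i) (a i))"
definition Trm :: "('n \<Rightarrow> nat \<Rightarrow> rat) \<Rightarrow> ('n \<Rightarrow> nat \<Rightarrow> rat) \<Rightarrow> 'n \<Rightarrow> nat \<Rightarrow> rat" where
  "Trm a x = (\<lambda>i. psub p (x i) (a i))"

lemma Tr_Qpn: "a \<in> Qpn p \<Longrightarrow> x \<in> Qpn p \<Longrightarrow> Tr a x \<in> Qpn p"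
  unfolding Tr_def Qpn_iff[OF p2] using padd_padic[OF p2] by auto
lemma Trm_Qpn: "a \<in> Qpn p \<Longrightarrow> x \<in> Qpn p \<Longrightarrow> Trm a x \<in> Qpn p"
  unfolding Trm_def Qpn_iff[OF p2] using psub_padic[OF p2] by auto

lemma Trm_Tr: "x \<in> Qpn p \<Longrightarrow> Trm a (Tr a x) = x"
  unfolding Trm_def Tr_def using psub_padd_cancel by (auto simp: Qpn_iff[OF p2])

lemma haar_outer_Tr: assumes a: "a \<in> Qpn p" shows "haar_outer p (Tr a ` A) \<le> haar_outer p (A :: ('n::finite \<Rightarrow> nat \<Rightarrow> rat) set)"
proof (rule haar_outer_image)
  fix c j and x :: "'n \<Rightarrow> nat \<Rightarrow> rat" assume c: "c \<in> Qpn p" and x: "x \<in> pballn p c j"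
  have "x \<in> Qpn p" "\<forall>i. in_pball p j (psub p (x i) (c i))" using x pballn_iff[OF p2 c] by auto
  then show "Tr a x \<in> pballn p (Tr a c) j" using pballn_iff[OF p2 Tr_Qpn[OF a c]] Tr_Qpn[OF a]
    by (simp add: Tr_def psub_padd2)
qed (rule Tr_Qpn[OF a])

lemma haar_outer_Trm: assumes a: "a \<in> Qpn p" shows "haar_outer p (Trm a ` A) \<le> haar_outer p (A :: ('n::finite \<Rightarrow> nat \<Rightarrow> rat) set)"
proof (rule haar_outer_image)
  fix c j and x :: "'n \<Rightarrow> nat \<Rightarrow> rat" assume c: "c \<in> Qpn p" and x: "x \<in> pballn p c j"
  have "x \<in> Qpn p" "\<forall>i. in_pball p j (psub p (x i) (c i))" using x pballn_iff[OF p2 c] by auto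
  then show "Trm a x \<in> pballn p (Trm a c) j" using pballn_iff[OF p2 Trm_Qpn[OF a c]] Trm_Qpn[OF a]
    by (simp add: Trm_def psub_psub2)
qed (rule Trm_Qpn[OF a])

lemma haar_outer_Tr_ge: assumes "a \<in> Qpn p" "A \<subseteq> Qpn p"
  shows "haar_outer p A \<le> haar_outer p (Tr a ` (A :: ('n::finite \<Rightarrow> nat \<Rightarrow> rat) set))"
proof -
  have "A \<subseteq> Trm a ` Tr a ` A"
  proof
    fix x assume "x \<in> A"
    then have xq: "x \<in> Qpn p" using assms(2) by blast
    have "x = Trm a (Tr a x)" using Trm_Tr[OF xq] by simp
    moreover have "Tr a x \<in> Tr a ` A" using \<open>x \<in> A\<close> by blast
    ultimately show "x \<in> Trm a ` Tr a ` A" by blast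
  qed
  then have "haar_outer p A \<le> haar_outer p (Trm a ` Tr a ` A)" by (rule haar_outer_mono[OF p2])
  also have "\<dots> \<le> haar_outer p (Tr a ` A)" by (rule haar_outer_Trm[OF assms(1)])
  finally show ?thesis .
qed


lemma qmod1_cong: "mdv 1 (r - r') \<Longrightarrow> qmod r 1 = qmod r' 1"
  by (rule qmod_cong) auto

lemma pmul0:
  assumes a: "a \<in> padic p" and b: "b \<in> padic p" and K: "pden p a + pden p b \<le> K"
  shows "pmul p a b 0 = qmod (a K * b K) 1"
proof -
  define ea where "ea = pden p a"
  define eb where "eb = pden p b"
  define K0 where "K0 = ea + eb"
  have pm: "pmul p a b 0 = qmod (a K0 * b K0) 1" unfolding pmul_def K0_def ea_def eb_def by (simp add: Let_def)
  obtain s where s: "a K - a K0 = of_int s * of_nat p ^ K0"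
    using padic_compat[OF a, of K0 K] K unfolding K0_def ea_def eb_def mdv_def by auto
  obtain t where t: "b K - b K0 = of_int t * of_nat p ^ K0"
    using padic_compat[OF b, of K0 K] K unfolding K0_def ea_def eb_def mdv_def by auto
  obtain \<alpha> where al: "a K0 = of_int \<alpha> / of_nat p ^ ea" using pden_prop[OF p2 a] unfolding ea_def by blast
  obtain \<beta> where be: "b K0 = of_int \<beta> / of_nat p ^ eb" using pden_prop[OF p2 b] unfolding eb_def by blast
  have P0: "(of_nat p::rat) ^ K0 = of_nat p ^ ea * of_nat p ^ eb" unfolding K0_def by (simp add: power_add)
  have aK: "a K = a K0 + of_int s * of_nat p ^ K0" using s by simp
  have bK: "b K = b K0 + of_int t * of_nat p ^ K0" using t by simp
  have "a K * b K - a K0 * b K0 = of_int s * (of_nat p ^ K0 * b K0) + of_int t * (of_nat p ^ K0 * a K0)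
      + of_int (s * t) * of_nat p ^ K0 * of_nat p ^ K0"
    unfolding aK bK by (simp add: algebra_simps)
  also have "of_nat p ^ K0 * b K0 = of_int (int p ^ ea * \<beta>)" unfolding P0 be using Pgt0[OF p2] by simp
  also have "of_nat p ^ K0 * a K0 = of_int (int p ^ eb * \<alpha>)" unfolding P0 al using Pgt0[OF p2] by simp
  finally have "a K * b K - a K0 * b K0 = of_int (s * (int p ^ ea * \<beta>) + t * (int p ^ eb * \<alpha>) + s * t * int p ^ K0 * int p ^ K0)"
    by simp
  then have "mdv 1 (a K * b K - a K0 * b K0)" unfolding mdv_def by (metis mult.right_neutral)
  then show ?thesis unfolding pm by (rule qmod1_cong[symmetric])
qed

lemma pdot0:
  assumes xi: "\<xi> \<in> Qpn p" and x: "x \<in> Qpn p" and N: "\<And>i. pden p (\<xi> i) + pden p (x i) \<le> N"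
  shows "pdot p \<xi> x 0 = qmod (\<Sum>i\<in>UNIV. \<xi> i N * x i N) 1"
proof -
  have "pdot p \<xi> x 0 = qmod (\<Sum>i\<in>UNIV. qmod (\<xi> i N * x i N) 1) 1"
  proof -
    have "pmul p (\<xi> i) (x i) 0 = qmod (\<xi> i N * x i N) 1" for i
      using pmul0 xi x N by (simp add: Qpn_iff[OF p2])
    then show ?thesis unfolding pdot_def by simp
  qed
  also have "\<dots> = qmod (\<Sum>i\<in>UNIV. \<xi> i N * x i N) 1"
  proof (rule qmod1_cong)
    have "mdv 1 (\<Sum>i\<in>UNIV. qmod (\<xi> i N * x i N) 1 - \<xi> i N * x i N)"
      by (rule mdv_sum) (use mdv_neg[OF qmod_mdv] in \<open>simp\<close>)
    then show "mdv 1 ((\<Sum>i\<in>UNIV. qmod (\<xi> i N * x i N) 1) - (\<Sum>i\<in>UNIV. \<xi> i N * x i N))"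
      by (simp add: sum_subtractf)
  qed
  finally show ?thesis .
qed

lemma powi_neg_eq: "(of_nat p::rat) powi (- int E) = 1 / of_nat p ^ E"
  by (cases E) (simp_all add: power_int_def power_inverse field_simps nat_add_distrib)

lemma pden_S: assumes "x \<in> S p (- int E)" shows "pden p (x i) \<le> E"
proof (rule pden_le[OF p2])
  have "in_pball p (- int E) (x i)" using assms S_iff[OF p2] by blast
  then show "\<forall>k. \<exists>a::int. x i k = of_int a / of_nat p ^ E"
    unfolding in_pball_def powi_neg_eq by auto
qed

lemma le_sumN: "(f::'n::finite \<Rightarrow> nat) i \<le> (\<Sum>j\<in>UNIV. f j)"
  by (rule member_le_sum) auto

lemma qmod_int1: "qmod (of_int z) 1 = 0"
  by (rule qmod_unique) (auto simp: mdv_def)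

lemma pdot_S_zero:
  assumes xi: "\<xi> \<in> S p (int m)" and x: "x \<in> S p (- int m)"
  shows "pdot p \<xi> x 0 = 0"
proof -
  define N where "N = (\<Sum>i\<in>UNIV. pden p (\<xi> i) + pden p (x i))"
  have xq: "\<xi> \<in> Qpn p" "x \<in> Qpn p" using xi x S_iff[OF p2] by auto
  have "\<exists>z::int. \<xi> i N * x i N = of_int z" for i
  proof -
    obtain \<alpha> where al: "\<xi> i N = of_int \<alpha> * of_nat p powi (int m)"
      using xi S_iff[OF p2] unfolding in_pball_def by blast
    obtain \<beta> where be: "x i N = of_int \<beta> * of_nat p powi (- int m)"
      using x S_iff[OF p2] unfolding in_pball_def by blast
    have "\<xi> i N * x i N = of_int (\<alpha> * \<beta>)" unfolding al be using Pgt0[OF p2]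
      by (simp add: power_int_def field_simps)
    then show ?thesis by blast
  qed
  then obtain zf where zf: "\<And>i. \<xi> i N * x i N = of_int (zf i)" by metis
  have "pdot p \<xi> x 0 = qmod (\<Sum>i\<in>UNIV. \<xi> i N * x i N) 1"
    by (rule pdot0[OF xq]) (unfold N_def, rule le_sumN[of "\<lambda>i. pden p (\<xi> i) + pden p (x i)"])
  also have "\<dots> = 0" unfolding zf by (simp add: qmod_int1 of_int_sum[symmetric] del: of_int_sum)
  finally show ?thesis .
qed

end


context fixes p :: nat assumes p2: "2 \<le> p" begin

lemma Ppow_xi_int:
  assumes a: "a \<in> padic p" and N: "pden p a \<le> N" shows "\<exists>z::int. of_nat p ^ N * a N = of_int z"
proof -
  obtain \<alpha> where al: "a N = of_int \<alpha> / of_nat p ^ pden p a" using pden_prop[OF p2 a] by blast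
  have "(of_nat p::rat) ^ N = of_nat p ^ (N - pden p a) * of_nat p ^ pden p a"
    using N by (simp add: power_add[symmetric])
  then have "of_nat p ^ N * a N = of_int (int p ^ (N - pden p a) * \<alpha>)" unfolding al using Pgt0[OF p2] by simp
  then show ?thesis by blast
qed

lemma pdot_Tr:
  assumes xi: "\<xi> \<in> Qpn p" and x: "x \<in> Qpn p" and a: "a \<in> Qpn p"
  shows "pdot p \<xi> (Tr p a x) 0 = qmod (pdot p \<xi> x 0 + pdot p \<xi> a 0) 1"
proof -
  define y where "y = Tr p a x"
  have y: "y \<in> Qpn p" unfolding y_def using Tr_Qpn[OF p2] a x by blast
  define N where "N = (\<Sum>i\<in>UNIV. pden p (\<xi> i) + pden p (x i) + pden p (a i) + pden p (y i))"
  have Ni: "pden p (\<xi> i) + pden p (x i) + pden p (a i) + pden p (y i) \<le> N" for i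
    unfolding N_def by (rule le_sumN[OF p2])
  have e1: "pdot p \<xi> x 0 = qmod (\<Sum>i\<in>UNIV. \<xi> i N * x i N) 1"
  proof (rule pdot0[OF p2 xi x])
    fix i show "pden p (\<xi> i) + pden p (x i) \<le> N" using Ni[of i] by linarith
  qed
  have e2: "pdot p \<xi> a 0 = qmod (\<Sum>i\<in>UNIV. \<xi> i N * a i N) 1"
  proof (rule pdot0[OF p2 xi a])
    fix i show "pden p (\<xi> i) + pden p (a i) \<le> N" using Ni[of i] by linarith
  qed
  have e3: "pdot p \<xi> y 0 = qmod (\<Sum>i\<in>UNIV. \<xi> i N * y i N) 1"
  proof (rule pdot0[OF p2 xi y])
    fix i show "pden p (\<xi> i) + pden p (y i) \<le> N" using Ni[of i] by linarith
  qed
  have dif: "mdv 1 (\<xi> i N * y i N - (\<xi> i N * x i N + \<xi> i N * a i N))" for i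
  proof -
    obtain z where z: "x i N + a i N - y i N = of_int z * of_nat p ^ N"
      using qmod_mdv[of "of_nat p ^ N" "x i N + a i N"] unfolding y_def Tr_def[OF p2] padd_def mdv_def by auto
    obtain w where w: "of_nat p ^ N * \<xi> i N = of_int w"
      using Ppow_xi_int[of "\<xi> i" N] xi Ni[of i] by (auto simp: Qpn_iff[OF p2])
    have "\<xi> i N * y i N - (\<xi> i N * x i N + \<xi> i N * a i N) = - (\<xi> i N * (x i N + a i N - y i N))"
      by (simp add: algebra_simps)
    also have "\<dots> = - (of_int z * (of_nat p ^ N * \<xi> i N))" unfolding z by (simp add: algebra_simps)
    also have "\<dots> = of_int (- z * w)" unfolding w by simp
    finally show ?thesis unfolding mdv_def by (metis mult.right_neutral)
  qed
  have "qmod (\<Sum>i\<in>UNIV. \<xi> i N * y i N) 1 = qmod (qmod (\<Sum>i\<in>UNIV. \<xi> i N * x i N) 1 + qmod (\<Sum>i\<in>UNIV. \<xi> i N * a i N) 1) 1"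
  proof (rule qmod1_cong[OF p2])
    have s: "mdv 1 (\<Sum>i\<in>UNIV. \<xi> i N * y i N - (\<xi> i N * x i N + \<xi> i N * a i N))"
      by (rule mdv_sum) (rule dif)
    have "mdv 1 ((\<Sum>i\<in>UNIV. \<xi> i N * y i N - (\<xi> i N * x i N + \<xi> i N * a i N))
       + ((\<Sum>i\<in>UNIV. \<xi> i N * x i N) - qmod (\<Sum>i\<in>UNIV. \<xi> i N * x i N) 1)
       + ((\<Sum>i\<in>UNIV. \<xi> i N * a i N) - qmod (\<Sum>i\<in>UNIV. \<xi> i N * a i N) 1))"
      by (intro mdv_add s qmod_mdv)
    then show "mdv 1 ((\<Sum>i\<in>UNIV. \<xi> i N * y i N) - (qmod (\<Sum>i\<in>UNIV. \<xi> i N * x i N) 1 + qmod (\<Sum>i\<in>UNIV. \<xi> i N * a i N) 1))"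
      by (simp add: sum_subtractf sum.distrib algebra_simps)
  qed
  then show ?thesis using e1 e2 e3 unfolding y_def by simp
qed

lemma pdot_bounds: "0 \<le> pdot p \<xi> x 0" "pdot p \<xi> x 0 < 1"
  unfolding pdot_def using qmod_bounds[of 1] by auto

lemma exists_x0:
  assumes xi: "\<xi> \<in> S p 0" and nz: "\<xi> \<noteq> (\<lambda>i. pzero)"
  shows "\<exists>x0 \<in> Qpn p. pdot p \<xi> x0 0 \<noteq> 0"
proof -
  have xq: "\<xi> \<in> Qpn p" using xi S_iff[OF p2] by auto
  obtain i where i: "\<xi> i \<noteq> pzero" using nz by auto
  have xii: "\<xi> i \<in> padic p" using xq by (auto simp: Qpn_iff[OF p2])
  obtain k0 where k0: "\<xi> i k0 \<noteq> 0" using i unfolding pzero_def by auto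
  define V where "V = {v::nat. in_pball p (int v) (\<xi> i)}"
  have V0: "0 \<in> V" using xi S_iff[OF p2] unfolding V_def by auto
  have Vb: "v < k0" if vV: "v \<in> V" for v
  proof (rule ccontr)
    assume "\<not> v < k0"
    then have "int k0 \<le> int v" by simp
    with vV have "\<xi> i k0 = 0" unfolding V_def in_pball_def by blast
    with k0 show False by simp
  qed
  have fV: "finite V" using Vb by (meson finite_nat_set_iff_bounded)
  define v where "v = Max V"
  have vV: "v \<in> V" unfolding v_def using fV V0 by (intro Max_in) auto
  have nV: "Suc v \<notin> V"
  proof
    assume "Suc v \<in> V"
    then have "Suc v \<le> Max V" by (rule Max_ge[OF fV])
    then show False unfolding v_def[symmetric] by simp
  qed
  have z1: "\<xi> i (Suc v) \<noteq> 0" using nV ip_nonneg[OF p2 xii, of "Suc v"] unfolding V_def by simp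
  obtain \<alpha> where al: "\<xi> i (Suc v) = of_int \<alpha> * of_nat p ^ v"
    using vV unfolding V_def in_pball_def powi_nonneg_eq[OF p2] by blast
  have "0 \<le> \<xi> i (Suc v)" "\<xi> i (Suc v) < of_nat p ^ Suc v" using padicD(1,2)[OF xii] by blast+
  then have "0 < \<xi> i (Suc v)" "\<xi> i (Suc v) < of_nat p * of_nat p ^ v" using z1 by auto
  then have h1: "0 < of_int \<alpha> * (of_nat p ^ v :: rat)" and h2: "of_int \<alpha> * (of_nat p ^ v :: rat) < of_nat p * of_nat p ^ v"
    unfolding al by auto
  have pv: "(0::rat) < of_nat p ^ v" using Ppos[OF p2] .
  have "(0::rat) < of_int \<alpha>" using h1 pv by (simp add: zero_less_mult_iff)
  moreover have "(of_int \<alpha>::rat) < of_nat p" using h2 pv by (simp add: mult_less_cancel_right_pos)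
  ultimately have al0: "0 < \<alpha>" "\<alpha> < int p" by simp_all
  define t where "t = (\<lambda>k::nat. 1 / (of_nat p ^ Suc v :: rat))"
  have tp: "t \<in> padic p"
  proof (rule padicI[OF p2])
    fix k
    show "0 \<le> t k" unfolding t_def by simp
    have "(1::rat) < of_nat p ^ Suc v" using p2 by (intro one_less_power) auto
    then have "1 / (of_nat p ^ Suc v :: rat) < 1" by simp
    also have "1 \<le> (of_nat p ^ k :: rat)" using p2 by simp
    finally show "t k < of_nat p ^ k" unfolding t_def .
    show "mdv (of_nat p ^ k) (t (Suc k) - t k)" unfolding t_def by simp
    show "den p (Suc v) (t k)" unfolding den_iff[OF p2] t_def by (rule exI[of _ 1]) simp
  qed
  define x0 where "x0 = (\<lambda>l. if l = i then t else pzero)"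
  have x0q: "x0 \<in> Qpn p" unfolding x0_def Qpn_iff[OF p2] using tp pzero_padic[OF p2] by auto
  define N where "N = (\<Sum>l\<in>UNIV. pden p (\<xi> l) + pden p (x0 l)) + Suc v"
  have "pdot p \<xi> x0 0 = qmod (\<Sum>l\<in>UNIV. \<xi> l N * x0 l N) 1"
  proof (rule pdot0[OF p2 xq x0q])
    fix l show "pden p (\<xi> l) + pden p (x0 l) \<le> N"
      using le_sumN[OF p2, of "\<lambda>l. pden p (\<xi> l) + pden p (x0 l)" l] unfolding N_def by linarith
  qed
  also have "(\<Sum>l\<in>UNIV. \<xi> l N * x0 l N) = \<xi> i N / of_nat p ^ Suc v"
  proof -
    have "(\<Sum>l\<in>UNIV. \<xi> l N * x0 l N) = (\<Sum>l\<in>UNIV. if l = i then \<xi> i N / of_nat p ^ Suc v else 0)"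
      by (rule sum.cong) (auto simp: x0_def t_def pzero_def)
    then show ?thesis by simp
  qed
  also have "qmod (\<xi> i N / of_nat p ^ Suc v) 1 = of_int \<alpha> / of_nat p"
  proof (rule qmod_unique)
    show "0 \<le> rat_of_int \<alpha> / rat_of_nat p" using al0 by simp
    show "rat_of_int \<alpha> / rat_of_nat p < 1" using al0 Pgt0[OF p2] by (simp add: divide_less_eq)
    obtain s where s: "\<xi> i N - \<xi> i (Suc v) = of_int s * of_nat p ^ Suc v"
      using padic_compat[OF xii, of "Suc v" N] unfolding N_def mdv_def by auto
    have "\<xi> i N / of_nat p ^ Suc v - of_int \<alpha> / of_nat p = of_int s"
    proof -
      have "\<xi> i N = of_int \<alpha> * of_nat p ^ v + of_int s * of_nat p ^ Suc v" using s al by simp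
      then show ?thesis using Pgt0[OF p2] by (simp add: field_simps)
    qed
    then show "mdv 1 (\<xi> i N / of_nat p ^ Suc v - of_int \<alpha> / of_nat p)" unfolding mdv_def by (metis mult.right_neutral)
  qed simp
  finally have "pdot p \<xi> x0 0 = of_int \<alpha> / of_nat p" .
  then have "pdot p \<xi> x0 0 \<noteq> 0" using al0 Pgt0[OF p2] by simp
  then show ?thesis using x0q by blast
qed

end


context fixes p :: nat assumes p2: "2 \<le> p" begin

lemma cyl_sets: "{x \<in> Qpn p. \<forall>i. x i N = r i} \<in> sets (haar p :: ('n::finite \<Rightarrow> nat \<Rightarrow> rat) measure)"
proof (cases "\<exists>c \<in> (Qpn p :: ('n \<Rightarrow> nat \<Rightarrow> rat) set). \<forall>i. c i N = r i")
  case True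
  then obtain c :: "'n \<Rightarrow> nat \<Rightarrow> rat" where c: "c \<in> Qpn p" "\<forall>i. c i N = r i" by blast
  have "{x \<in> Qpn p. \<forall>i. x i N = r i} = pballn p c (int N)"
    using pballn_nat_iff[OF p2 c(1)] c(2) by auto
  then show ?thesis using pballn_sets[OF p2 c(1)] by simp
next
  case False
  have e: "{x \<in> Qpn p. \<forall>i. x i N = r i} = ({} :: ('n \<Rightarrow> nat \<Rightarrow> rat) set)" using False by auto
  show ?thesis unfolding e by simp
qed

lemma levelset_sets:
  assumes xi: "(\<xi> :: 'n::finite \<Rightarrow> nat \<Rightarrow> rat) \<in> Qpn p"
  shows "{x \<in> Qpn p. pdot p \<xi> x 0 \<in> V} \<in> sets (haar p :: ('n \<Rightarrow> nat \<Rightarrow> rat) measure)"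
proof -
  define NE where "NE = (\<lambda>E::nat. (\<Sum>i\<in>UNIV. pden p (\<xi> i)) + E)"
  define h where "h = (\<lambda>E (r :: 'n \<Rightarrow> rat). qmod (\<Sum>i\<in>UNIV. \<xi> i (NE E) * r i) 1)"
  have key: "pdot p \<xi> x 0 = h E (\<lambda>i. x i (NE E))" if x: "x \<in> S p (- int E)" for x E
  proof -
    have xq: "x \<in> Qpn p" using x S_iff[OF p2] by auto
    show ?thesis unfolding h_def
    proof (rule pdot0[OF p2 xi xq])
      fix i
      show "pden p (\<xi> i) + pden p (x i) \<le> NE E"
        using le_sumN[OF p2, of "\<lambda>i. pden p (\<xi> i)" i] pden_S[OF p2 x, of i] unfolding NE_def by linarith
    qed
  qed
  have eq: "{x \<in> Qpn p. pdot p \<xi> x 0 \<in> V} =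
    (\<Union>E\<in>UNIV. \<Union>r\<in>{r. h E r \<in> V}. S p (- int E) \<inter> {x \<in> Qpn p. \<forall>i. x i (NE E) = r i})"
  proof (intro set_eqI iffI)
    fix x assume x: "x \<in> {x \<in> Qpn p. pdot p \<xi> x 0 \<in> V}"
    then obtain E where E: "x \<in> S p (- int E)" using Qpn_Union_S[OF p2] by blast
    then show "x \<in> (\<Union>E\<in>UNIV. \<Union>r\<in>{r. h E r \<in> V}. S p (- int E) \<inter> {x \<in> Qpn p. \<forall>i. x i (NE E) = r i})"
      using key[OF E] x by (intro UN_I[of E]) (auto intro!: UN_I[of "\<lambda>i. x i (NE E)"])
  next
    fix x assume "x \<in> (\<Union>E\<in>UNIV. \<Union>r\<in>{r. h E r \<in> V}. S p (- int E) \<inter> {x \<in> Qpn p. \<forall>i. x i (NE E) = r i})"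
    then obtain E r where "h E r \<in> V" "x \<in> S p (- int E)" "x \<in> Qpn p" "\<forall>i. x i (NE E) = r i" by blast
    then show "x \<in> {x \<in> Qpn p. pdot p \<xi> x 0 \<in> V}" using key[of x E] by (auto simp: fun_eq_iff[symmetric])
  qed
  show ?thesis unfolding eq
    by (intro sets.countable_UN'' sets.Int S_sets[OF p2] cyl_sets) auto
qed

definition cf :: "rat \<Rightarrow> complex" where
  "cf q = exp (2 * of_real pi * \<i> * of_real (of_rat q))"

lemma chi_cf: "chi y = cf (y 0)" unfolding chi_def pfrac_def cf_def ..

lemma chi_meas:
  assumes xi: "(\<xi> :: 'n::finite \<Rightarrow> nat \<Rightarrow> rat) \<in> Qpn p"
  shows "(\<lambda>x. chi (pdot p \<xi> x)) \<in> borel_measurable (haar p :: ('n \<Rightarrow> nat \<Rightarrow> rat) measure)"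
proof (rule borel_measurableI)
  fix U :: "complex set"
  have "(\<lambda>x. chi (pdot p \<xi> x)) -` U \<inter> space (haar p :: ('n \<Rightarrow> nat \<Rightarrow> rat) measure) = {x \<in> Qpn p. pdot p \<xi> x 0 \<in> cf -` U}"
    unfolding space_haar[OF p2] chi_cf by auto
  then show "(\<lambda>x. chi (pdot p \<xi> x)) -` U \<inter> space (haar p :: ('n \<Rightarrow> nat \<Rightarrow> rat) measure) \<in> sets (haar p)"
    using levelset_sets[OF xi, of "cf -` U"] by simp
qed

end


locale ctx =
  fixes p :: nat and J :: "real \<Rightarrow> real" and \<gamma> A B C1 :: real
    and M :: "('n::finite \<Rightarrow> nat \<Rightarrow> rat) measure"
  assumes p2: "2 \<le> p" and M: "M = haar p"
    and Jnn: "\<forall>t>0. J t \<ge> 0"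
    and intJ: "integrable M (\<lambda>x. J (vnorm p x))"
    and int1: "(\<integral>x. J (vnorm p x) \<partial>M) = 1"
    and gneg: "\<gamma> < 0"
    and ABC: "A > 0" "B > 0" "C1 > 0"
    and Jb: "\<forall>x::'n \<Rightarrow> nat \<Rightarrow> rat. x \<in> Qpn p \<longrightarrow> x \<noteq> (\<lambda>i. pzero) \<longrightarrow>
              A * vnorm p x powr \<gamma> * exp (- C1 * vnorm p x) \<le> J (vnorm p x) \<and>
              J (vnorm p x) \<le> B * vnorm p x powr \<gamma> * exp (- C1 * vnorm p x)"
begin

lemma spaceM: "space M = Qpn p" unfolding M using space_haar[OF p2] .
lemma setsM: "sets M = sets (haar p)" unfolding M ..

lemma null_False: assumes "emeasure M (Qpn p) = 0" shows False
proof -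
  have "Qpn p \<in> null_sets M" using assms sets.top[of M] unfolding spaceM by auto
  then have "AE x in M. J (vnorm p x) = 0" by (rule AE_I') (auto simp: spaceM)
  then have "(\<integral>x. J (vnorm p x) \<partial>M) = 0" by (rule integral_eq_zero_AE)
  then show False using int1 by simp
qed

lemma MS: "measure_space (Qpn p) (sets (haar p :: ('n \<Rightarrow> nat \<Rightarrow> rat) measure)) (haar_outer p)"
proof (rule ccontr)
  assume "\<not> measure_space (Qpn p) (sets (haar p :: ('n \<Rightarrow> nat \<Rightarrow> rat) measure)) (haar_outer p)"
  then have "emeasure M (Qpn p) = 0" unfolding M by (rule haar_degenerate[OF p2])
  then show False by (rule null_False)
qed

lemma emM: "X \<in> sets M \<Longrightarrow> emeasure M X = haar_outer p X"
  unfolding M by (rule haar_emeasure[OF p2 MS])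

lemma S_setsM: "S p j \<in> sets M" unfolding M by (rule S_sets[OF p2])

definition q :: real where "q = real p powr (- real CARD('n))"

lemma q_pos: "0 < q" unfolding q_def using p2 by simp
lemma q_half: "q \<le> 1/2"
proof -
  have "real p powr (- real CARD('n)) \<le> real p powr (-1)"
    using p2 by (intro powr_mono) auto
  also have "\<dots> \<le> 1/2" using p2 by (simp add: powr_minus divide_simps)
  finally show ?thesis unfolding q_def .
qed

lemma vol_split: "real p powr (- real CARD('n) * real_of_int (K + int m)) = real p powr (- real CARD('n) * real_of_int K) * q ^ m"
proof -
  have "q ^ m = real p powr (real m * (- real CARD('n)))" unfolding q_def
    using p2 by (subst powr_power) auto
  then show ?thesis using p2 by (simp add: powr_add[symmetric] algebra_simps)
qed

lemma haar_S_le: "haar_outer p (S p K :: ('n \<Rightarrow> nat \<Rightarrow> rat) set) \<le> ennreal (2 * real p powr (- real CARD('n) * real_of_int K))"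
proof -
  define c where "c = real p powr (- real CARD('n) * real_of_int K)"
  have c0: "0 \<le> c" unfolding c_def by simp
  define C where "C = (\<lambda>m::nat. ((\<lambda>i. pzero) :: 'n \<Rightarrow> nat \<Rightarrow> rat, K + int m))"
  have "haar_outer p (S p K :: ('n \<Rightarrow> nat \<Rightarrow> rat) set) \<le> (\<Sum>m. ennreal (real p powr (- real CARD('n) * real_of_int (snd (C m)))))"
  proof (rule haar_outer_le[OF p2])
    show "\<forall>m. fst (C m) \<in> Qpn p" unfolding C_def using zero_Qpn[OF p2] by simp
    show "S p K \<subseteq> (\<Union>m. pballn p (fst (C m)) (snd (C m)))"
      unfolding C_def S_def[OF p2] by (intro UN_upper[of 0, THEN subset_trans[rotated]]) auto
  qed
  also have "\<dots> = (\<Sum>m. ennreal (c * q ^ m))" unfolding C_def c_def snd_conv vol_split ..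
  also have "\<dots> = ennreal (\<Sum>m. c * q ^ m)"
    by (rule suminf_ennreal2) (use c0 q_pos q_half in \<open>auto intro!: summable_mult summable_geometric\<close>)
  also have "(\<Sum>m. c * q ^ m) = c * (1 / (1 - q))"
    using q_pos q_half by (simp add: suminf_mult suminf_geometric)
  also have "\<dots> \<le> 2 * c"
  proof -
    have "1 / (1 - q) \<le> 2" using q_pos q_half by (simp add: field_simps)
    from mult_left_mono[OF this c0] show ?thesis by (simp add: mult.commute)
  qed
  finally show ?thesis unfolding c_def by (simp add: ennreal_leI order_trans)
qed


abbreviation Z :: "'n \<Rightarrow> nat \<Rightarrow> rat" where "Z \<equiv> (\<lambda>i. pzero)"

lemma Z_Int: "{Z} = (\<Inter>m::nat. S p (int m))"
proof (intro set_eqI iffI)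
  fix x :: "'n \<Rightarrow> nat \<Rightarrow> rat" assume "x \<in> (\<Inter>m::nat. S p (int m))"
  then have x: "x \<in> Qpn p" "\<And>m i. in_pball p (int m) (x i)" using S_iff[OF p2] by auto
  have "x i = pzero" for i
  proof
    fix k show "x i k = pzero k" using ip_nonneg[OF p2, of "x i" k] x by (auto simp: Qpn_iff[OF p2] pzero_def)
  qed
  then show "x \<in> {Z}" by auto
qed (use zero_S[OF p2] in auto)

lemma Z_sets: "{Z} \<in> sets M"
  unfolding Z_Int by (rule sets.countable_INT) (use S_setsM in auto)

lemma powr_q: "real p powr (- real CARD('n) * real_of_int (int m)) = q ^ m"
proof -
  have "q ^ m = real p powr (real m * (- real CARD('n)))" unfolding q_def using p2 by (subst powr_power) auto
  then show ?thesis by (simp add: mult.commute)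
qed

lemma S_nat_le: "emeasure M (S p (int m)) \<le> ennreal (2 * q ^ m)"
  using emM[OF S_setsM] haar_S_le[of "int m"] unfolding powr_q by simp

lemma Z_null: "emeasure M {Z} = 0"
proof -
  have lim: "(\<lambda>m. ennreal (2 * q ^ m)) \<longlonglongrightarrow> ennreal (2 * 0)"
    by (intro tendsto_ennrealI tendsto_mult tendsto_const LIMSEQ_power_zero) (use q_pos q_half in auto)
  have "emeasure M {Z} \<le> ennreal (2 * q ^ m)" for m
  proof -
    have "{Z} \<subseteq> S p (int m)" using zero_S[OF p2] by auto
    then have "emeasure M {Z} \<le> emeasure M (S p (int m))" by (rule emeasure_mono) (rule S_setsM)
    then show ?thesis using S_nat_le[of m] by simp
  qed
  then have "emeasure M {Z} \<le> ennreal (2 * 0)" by (intro LIMSEQ_le_const[OF lim]) auto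
  then show ?thesis by simp
qed

lemma S_step: "ennreal q * emeasure M (S p j) \<le> emeasure M (S p (j + 1))"
  using haar_outer_S_step[OF p2, of j] emM[OF S_setsM] unfolding q_def by simp

lemma S_lower: "ennreal (q ^ m) * emeasure M (S p 0) \<le> emeasure M (S p (int m))"
proof (induction m)
  case 0 then show ?case by simp
next
  case (Suc m)
  have "ennreal (q ^ Suc m) * emeasure M (S p 0) = ennreal q * (ennreal (q ^ m) * emeasure M (S p 0))"
    using q_pos by (simp add: ennreal_mult mult.assoc)
  also have "\<dots> \<le> ennreal q * emeasure M (S p (int m))" using Suc by (intro mult_left_mono) auto
  also have "\<dots> \<le> emeasure M (S p (int m + 1))" by (rule S_step)
  also have "S p (int m + 1) = S p (int (Suc m))" by (simp add: add.commute)
  finally show ?case .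
qed

lemma S0_fin: "emeasure M (S p 0) \<le> ennreal 2"
  using S_nat_le[of 0] by simp

lemma S0_pos: "emeasure M (S p 0) \<noteq> 0"
proof
  assume h: "emeasure M (S p 0) = 0"
  have "emeasure M (S p (- int k)) = 0" for k
  proof (induction k)
    case 0 then show ?case using h by simp
  next
    case (Suc k)
    have "ennreal q * emeasure M (S p (- int (Suc k))) \<le> emeasure M (S p (- int (Suc k) + 1))" by (rule S_step)
    also have "- int (Suc k) + 1 = - int k" by simp
    finally have "ennreal q * emeasure M (S p (- int (Suc k))) = 0" using Suc by simp
    then show ?case using q_pos by simp
  qed
  then have "emeasure M (\<Union>k. S p (- int k)) = 0" by (intro emeasure_UN_eq_0) (use S_setsM in auto)
  then show False using null_False Qpn_Union_S[OF p2] by metis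
qed

end


context ctx begin

lemma norm_cf: "norm (cf r) = 1" unfolding cf_def[OF p2] by simp
lemma Re_cf: "Re (cf r) = cos (2 * pi * of_rat r)" unfolding cf_def[OF p2] Re_exp by simp
lemma cf0: "cf 0 = 1" unfolding cf_def[OF p2] by simp
lemma chi_cf': "chi y = cf (y 0)" by (rule chi_cf[OF p2])

lemma Jpos: assumes "x \<in> Qpn p" "x \<noteq> Z" shows "0 < J (vnorm p x)"
proof -
  have v: "0 < vnorm p x" using vnorm_pos[OF p2 assms] .
  have "0 < A * vnorm p x powr \<gamma> * exp (- C1 * vnorm p x)" using v ABC by simp
  also have "\<dots> \<le> J (vnorm p x)" using Jb assms by blast
  finally show ?thesis .
qed

lemma Jmeas: "(\<lambda>x. J (vnorm p x)) \<in> borel_measurable M"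
  using intJ by (rule borel_measurable_integrable)

lemma chiM: "\<xi> \<in> Qpn p \<Longrightarrow> (\<lambda>x. chi (pdot p \<xi> x)) \<in> borel_measurable M"
  unfolding M by (rule chi_meas[OF p2])

lemma g_meas: "\<xi> \<in> Qpn p \<Longrightarrow> (\<lambda>x. chi (pdot p \<xi> x) * complex_of_real (J (vnorm p x))) \<in> borel_measurable M"
  using chiM Jmeas by measurable

lemma intJc: "integrable M (\<lambda>x. complex_of_real (J (vnorm p x)))"
  using intJ by (rule integrable_of_real)

lemma g_int: "\<xi> \<in> Qpn p \<Longrightarrow> integrable M (\<lambda>x. chi (pdot p \<xi> x) * complex_of_real (J (vnorm p x)))"
  by (rule Bochner_Integration.integrable_bound[OF intJc g_meas]) (auto simp: norm_mult chi_cf' norm_cf)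

lemma FJ: "fourierJ p J \<xi> = (\<integral>x. chi (pdot p \<xi> x) * complex_of_real (J (vnorm p x)) \<partial>M)"
  unfolding fourierJ_def M ..

lemma one_minus_F: assumes xi: "(\<xi> :: 'n \<Rightarrow> nat \<Rightarrow> rat) \<in> Qpn p"
  shows "1 - fourierJ p J \<xi> = (\<integral>x. (1 - chi (pdot p \<xi> x)) * complex_of_real (J (vnorm p x)) \<partial>M)"
proof -
  have "1 = (\<integral>x. complex_of_real (J (vnorm p x)) \<partial>M)" using int1 by simp
  then have "1 - fourierJ p J \<xi> = (\<integral>x. complex_of_real (J (vnorm p x)) - chi (pdot p \<xi> x) * complex_of_real (J (vnorm p x)) \<partial>M)"
    unfolding FJ using Bochner_Integration.integral_diff[OF intJc g_int[OF xi]] by simp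
  then show ?thesis by (simp add: algebra_simps)
qed

lemma norm_one_minus_F: assumes xi: "(\<xi> :: 'n \<Rightarrow> nat \<Rightarrow> rat) \<in> S p (int m)"
  shows "ennreal (norm (1 - fourierJ p J \<xi>)) \<le> (\<integral>\<^sup>+x. ennreal (2 * indicator (Qpn p - S p (- int m)) x * \<bar>J (vnorm p x)\<bar>) \<partial>M)"
proof -
  have xq: "\<xi> \<in> Qpn p" using xi S_iff[OF p2] by auto
  have int: "integrable M (\<lambda>x. (1 - chi (pdot p \<xi> x)) * complex_of_real (J (vnorm p x)))"
    using Bochner_Integration.integrable_diff[OF intJc g_int[OF xq]] by (simp add: algebra_simps)
  have "ennreal (norm (1 - fourierJ p J \<xi>)) \<le> (\<integral>\<^sup>+x. ennreal (norm ((1 - chi (pdot p \<xi> x)) * complex_of_real (J (vnorm p x)))) \<partial>M)"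
    unfolding one_minus_F[OF xq] by (rule integral_norm_bound_ennreal[OF int])
  also have "\<dots> \<le> (\<integral>\<^sup>+x. ennreal (2 * indicator (Qpn p - S p (- int m)) x * \<bar>J (vnorm p x)\<bar>) \<partial>M)"
  proof (rule nn_integral_mono)
    fix x assume x: "x \<in> space M"
    show "ennreal (norm ((1 - chi (pdot p \<xi> x)) * complex_of_real (J (vnorm p x))))
      \<le> ennreal (2 * indicator (Qpn p - S p (- int m)) x * \<bar>J (vnorm p x)\<bar>)"
    proof (cases "x \<in> S p (- int m)")
      case True
      then have "pdot p \<xi> x 0 = 0" by (rule pdot_S_zero[OF p2 xi])
      then have "chi (pdot p \<xi> x) = 1" by (simp add: chi_cf' cf0)
      then show ?thesis by simp
    next
      case False
      have "norm (1 - chi (pdot p \<xi> x)) \<le> norm (1::complex) + norm (chi (pdot p \<xi> x))" by (rule norm_triangle_ineq4)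
      then have "norm (1 - chi (pdot p \<xi> x)) \<le> 2" by (simp add: chi_cf' norm_cf)
      then have "norm ((1 - chi (pdot p \<xi> x)) * complex_of_real (J (vnorm p x))) \<le> 2 * \<bar>J (vnorm p x)\<bar>"
        by (simp add: norm_mult mult_right_mono)
      then show ?thesis using False x spaceM by (simp add: ennreal_leI)
    qed
  qed
  finally show ?thesis .
qed

end


context ctx begin

lemma AE_notZ: "AE x in M. x \<noteq> Z"
  by (rule AE_I'[of "{Z}"]) (use Z_null Z_sets in auto)

lemma F_ne_1:
  assumes xi: "(\<xi> :: 'n \<Rightarrow> nat \<Rightarrow> rat) \<in> S p 0" and nz: "\<xi> \<noteq> Z"
  shows "fourierJ p J \<xi> \<noteq> 1"
proof
  assume F1: "fourierJ p J \<xi> = 1"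
  have xq: "\<xi> \<in> Qpn p" using xi S_iff[OF p2] by auto
  define h where "h = (\<lambda>x. (1 - chi (pdot p \<xi> x)) * complex_of_real (J (vnorm p x)))"
  define k where "k = (\<lambda>x. (1 - cos (2 * pi * of_rat (pdot p \<xi> x 0))) * J (vnorm p x))"
  have hint: "integrable M h" unfolding h_def
    using Bochner_Integration.integrable_diff[OF intJc g_int[OF xq]] by (simp add: algebra_simps)
  have kRe: "k = (\<lambda>x. Re (h x))" unfolding k_def h_def by (auto simp: chi_cf' Re_cf)
  have kint: "integrable M k" unfolding kRe using hint by simp
  have "(\<integral>x. k x \<partial>M) = Re (1 - fourierJ p J \<xi>)" unfolding kRe one_minus_F[OF xq] h_def[symmetric]
    using hint by simp
  then have k0: "(\<integral>x. k x \<partial>M) = 0" using F1 by simp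
  have knn: "AE x in M. 0 \<le> k x"
    using AE_notZ AE_space
  proof eventually_elim
    case (elim x)
    then have "0 < J (vnorm p x)" using Jpos spaceM by auto
    moreover have "cos (2 * pi * of_rat (pdot p \<xi> x 0)) \<le> 1" by simp
    ultimately show ?case unfolding k_def by simp
  qed
  have "AE x in M. k x = 0" using integral_nonneg_eq_0_iff_AE[OF kint knn] k0 by simp
  then have AE0: "AE x in M. pdot p \<xi> x 0 = 0"
    using AE_notZ AE_space
  proof eventually_elim
    case (elim x)
    then have Jp: "0 < J (vnorm p x)" using Jpos spaceM by auto
    define t where "t = (of_rat (pdot p \<xi> x 0) :: real)"
    have "cos (2 * pi * t) = 1" using elim(1) Jp unfolding k_def t_def by simp
    then obtain n :: int where n: "2 * pi * t = of_int n * 2 * pi" using cos_one_2pi_int by blast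
    then have tn: "t = of_int n" by simp
    have "0 \<le> t" "t < 1" unfolding t_def using pdot_bounds[OF p2, of \<xi> x]
      by (simp_all add: zero_le_of_rat_iff of_rat_less_1_iff)
    then have "n = 0" using tn by simp
    then have "t = 0" using tn by simp
    then show ?case unfolding t_def by simp
  qed
  define L0 where "L0 = {x \<in> Qpn p. pdot p \<xi> x 0 \<in> {0}}"
  have L0s: "L0 \<in> sets M" unfolding L0_def setsM by (rule levelset_sets[OF p2 xq])
  define N where "N = Qpn p - L0"
  have Ns: "N \<in> sets M" unfolding N_def using L0s sets.top[of M] spaceM by auto
  have "emeasure M N = 0"
    using AE0 by (subst (asm) AE_iff_measurable[OF Ns]) (auto simp: N_def L0_def spaceM)
  obtain x0 where x0: "x0 \<in> Qpn p" "pdot p \<xi> x0 0 \<noteq> 0" using exists_x0[OF p2 xi nz] by blast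
  have TL: "Tr p x0 ` L0 \<subseteq> N"
  proof
    fix y assume "y \<in> Tr p x0 ` L0"
    then obtain x where x: "x \<in> L0" "y = Tr p x0 x" by blast
    have xq': "x \<in> Qpn p" using x L0_def by auto
    have "pdot p \<xi> y 0 = qmod (pdot p \<xi> x 0 + pdot p \<xi> x0 0) 1" unfolding x(2) by (rule pdot_Tr[OF p2 xq xq' x0(1)])
    also have "\<dots> = pdot p \<xi> x0 0" using x L0_def qmod_id[of 1 "pdot p \<xi> x0 0"] pdot_bounds[OF p2] by auto
    finally have "pdot p \<xi> y 0 \<noteq> 0" using x0 by simp
    moreover have "y \<in> Qpn p" unfolding x(2) by (rule Tr_Qpn[OF p2 x0(1) xq'])
    ultimately show "y \<in> N" unfolding N_def L0_def by auto
  qed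
  have "haar_outer p L0 \<le> haar_outer p (Tr p x0 ` L0)"
    by (rule haar_outer_Tr_ge[OF p2 x0(1)]) (auto simp: L0_def)
  also have "\<dots> \<le> haar_outer p N" by (rule haar_outer_mono[OF p2 TL])
  also have "\<dots> = emeasure M N" using emM[OF Ns] by simp
  finally have "haar_outer p L0 = 0" using \<open>emeasure M N = 0\<close> by simp
  then have "emeasure M L0 = 0" using emM[OF L0s] by simp
  have "Qpn p = L0 \<union> N" unfolding N_def L0_def by auto
  then have "emeasure M (Qpn p) \<le> emeasure M L0 + emeasure M N"
    using emeasure_subadditive[OF L0s Ns] by simp
  then have "emeasure M (Qpn p) = 0" using \<open>emeasure M N = 0\<close> \<open>emeasure M L0 = 0\<close> by simp
  then show False by (rule null_False)
qed

end


lemma exp_pow_lower: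
  fixes y :: real assumes "0 \<le> y" "0 < N"
  shows "(y / real N) ^ N \<le> exp y"
proof -
  have "y / real N \<le> exp (y / real N)" using exp_ge_add_one_self[of "y / real N"] by linarith
  then have "(y / real N) ^ N \<le> exp (y / real N) ^ N" using assms by (intro power_mono) auto
  also have "\<dots> = exp (real N * (y / real N))" by (rule exp_of_nat_mult[symmetric])
  also have "\<dots> = exp y" using assms by simp
  finally show ?thesis .
qed

lemma num_bound:
  fixes P cc bb :: real and n k m :: nat
  assumes P: "2 \<le> P" and C: "0 < cc" and bb: "0 < bb"
  shows "2 * bb * exp (- cc * P ^ (k + m)) * (2 * P ^ (n * (k + m + 1)))
    \<le> (4 * bb * P ^ n * (real (2*n+2) / cc) ^ (2*n+2)) * ((1/P) ^ ((n+1)*m) * (1/P) ^ k)"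
proof -
  define j where "j = k + m"
  define N where "N = 2*n+2"
  have Pp: "0 < P" using P by simp
  define y where "y = cc * P ^ j"
  have y0: "0 < y" unfolding y_def using C Pp by simp
  have "(y / real N) ^ N \<le> exp y" using exp_pow_lower[of y N] y0 unfolding N_def by simp
  then have e: "exp (- y) \<le> (real N / cc) ^ N / P ^ (N * j)"
  proof -
    assume h: "(y / real N) ^ N \<le> exp y"
    have pos: "0 < (y / real N) ^ N" using y0 unfolding N_def by simp
    have "exp (- y) = 1 / exp y" by (simp add: exp_minus field_simps)
    also have "\<dots> \<le> 1 / (y / real N) ^ N" using h pos by (intro divide_left_mono) auto
    also have "\<dots> = (real N / cc) ^ N / P ^ (N * j)" unfolding y_def using C Pp
      by (simp add: power_divide power_mult_distrib power_mult[symmetric] mult.commute field_simps)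
    finally show ?thesis .
  qed
  have "2 * bb * exp (- cc * P ^ (k + m)) * (2 * P ^ (n * (k + m + 1)))
      = 4 * bb * P ^ n * P ^ (n * j) * exp (- y)"
    unfolding y_def j_def by (simp add: power_add algebra_simps)
  also have "\<dots> \<le> 4 * bb * P ^ n * P ^ (n * j) * ((real N / cc) ^ N / P ^ (N * j))"
    using e bb Pp by (intro mult_left_mono) auto
  also have "\<dots> = (4 * bb * P ^ n * (real N / cc) ^ N) * (P ^ (n * j) / P ^ (N * j))" by simp
  also have "\<dots> \<le> (4 * bb * P ^ n * (real N / cc) ^ N) * ((1/P) ^ ((n+1)*m) * (1/P) ^ k)"
  proof (rule mult_left_mono)
    have "P ^ (n * j) / P ^ (N * j) = (1/P) ^ ((n+2) * j)"
    proof -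
      have "N * j = n * j + (n+2) * j" unfolding N_def by (simp add: algebra_simps)
      then have "P ^ (N * j) = P ^ (n * j) * P ^ ((n+2) * j)" by (simp add: power_add)
      then show ?thesis using Pp by (simp add: power_one_over)
    qed
    also have "(1/P) ^ ((n+2) * j) \<le> (1/P) ^ ((n+1)*m + k)"
      using P unfolding j_def by (intro power_decreasing) (auto simp: algebra_simps)
    also have "(1/P) ^ ((n+1)*m + k) = (1/P) ^ ((n+1)*m) * (1/P) ^ k" by (simp add: power_add)
    finally show "P ^ (n * j) / P ^ (N * j) \<le> (1/P) ^ ((n+1)*m) * (1/P) ^ k" .
    show "0 \<le> 4 * bb * P ^ n * (real N / cc) ^ N" using bb C Pp by simp
  qed
  finally show ?thesis unfolding N_def .
qed

lemma ennreal_term_le_suminf: "(f::nat \<Rightarrow> ennreal) k \<le> suminf f"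
  using sum_le_suminf[OF summableI, of "{k}" f] by simp

context ctx begin

lemma powr_nat_eq: "real p powr (- real CARD('n) * real_of_int (- int j)) = real p ^ (CARD('n) * j)"
proof -
  have "real p powr (- real CARD('n) * real_of_int (- int j)) = real p powr (real (CARD('n) * j))" by simp
  also have "\<dots> = real p ^ (CARD('n) * j)" using p2 by (intro powr_realpow) auto
  finally show ?thesis .
qed

lemma not_S_vnorm: assumes "x \<in> Qpn p" "x \<notin> S p (- int j)" shows "real p ^ j < vnorm p x"
proof -
  have "\<not> vnorm p x \<le> real p powr (- real_of_int (- int j))" using assms S_vnorm[OF p2] by blast
  moreover have "real p powr (- real_of_int (- int j)) = real p ^ j" using p2 by (simp add: powr_realpow)
  ultimately show ?thesis by simp
qed

lemma J_tail_pt: assumes x: "(x :: 'n \<Rightarrow> nat \<Rightarrow> rat) \<in> Qpn p" "x \<notin> S p (- int j)"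
  shows "\<bar>J (vnorm p x)\<bar> \<le> B * exp (- C1 * real p ^ j)"
proof -
  have v: "real p ^ j < vnorm p x" by (rule not_S_vnorm[OF x])
  have "1 \<le> real p ^ j" using p2 by (intro one_le_power) simp
  then have v1: "1 \<le> vnorm p x" using v by linarith
  have nz: "x \<noteq> Z" using x(2) zero_S[OF p2] by auto
  have J0: "0 \<le> J (vnorm p x)" using Jnn v1 by auto
  have "J (vnorm p x) \<le> B * vnorm p x powr \<gamma> * exp (- C1 * vnorm p x)" using Jb x(1) nz by blast
  also have "\<dots> \<le> B * 1 * exp (- C1 * real p ^ j)"
  proof (intro mult_mono)
    show "vnorm p x powr \<gamma> \<le> 1" using powr_mono[of \<gamma> 0 "vnorm p x"] gneg v1 by simp
    show "exp (- C1 * vnorm p x) \<le> exp (- C1 * real p ^ j)" using v ABC by simp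
  qed (use ABC in auto)
  finally show ?thesis using J0 by simp
qed

lemma tail_pt: assumes x: "(x :: 'n \<Rightarrow> nat \<Rightarrow> rat) \<in> space M"
  shows "ennreal (2 * indicator (Qpn p - S p (- int m)) x * \<bar>J (vnorm p x)\<bar>)
    \<le> (\<Sum>k. ennreal (2 * B * exp (- C1 * real p ^ (k + m))) * indicator (S p (- int (k + m + 1))) x)"
proof (cases "x \<in> S p (- int m)")
  case True then show ?thesis by simp
next
  case False
  have xq: "x \<in> Qpn p" using x spaceM by simp
  have ex: "\<exists>K. x \<in> S p (- int K)" using xq Qpn_Union_S[OF p2] by blast
  define K0 where "K0 = (LEAST K. x \<in> S p (- int K))"
  have K0: "x \<in> S p (- int K0)" unfolding K0_def using ex by (rule LeastI_ex)
  have mK: "m < K0"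
  proof (rule ccontr)
    assume "\<not> m < K0"
    then have "S p (- int K0) \<subseteq> S p (- int m)" by (intro S_mono[OF p2]) auto
    then show False using K0 False by blast
  qed
  define k where "k = K0 - m - 1"
  have kK: "k + m + 1 = K0" "k + m < K0" unfolding k_def using mK by auto
  have nS: "x \<notin> S p (- int (k + m))" unfolding K0_def using not_less_Least[OF kK(2)[unfolded K0_def]] .
  have Jb': "\<bar>J (vnorm p x)\<bar> \<le> B * exp (- C1 * real p ^ (k + m))" by (rule J_tail_pt[OF xq nS])
  have "ennreal (2 * indicator (Qpn p - S p (- int m)) x * \<bar>J (vnorm p x)\<bar>) \<le> ennreal (2 * B * exp (- C1 * real p ^ (k + m)))"
    using False xq Jb' by (intro ennreal_leI) simp
  also have "\<dots> = ennreal (2 * B * exp (- C1 * real p ^ (k + m))) * indicator (S p (- int (k + m + 1))) x"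
    using K0 kK(1) by simp
  also have "\<dots> \<le> (\<Sum>k. ennreal (2 * B * exp (- C1 * real p ^ (k + m))) * indicator (S p (- int (k + m + 1))) x)"
    by (rule ennreal_term_le_suminf[where f = "\<lambda>k. ennreal (2 * B * exp (- C1 * real p ^ (k + m))) * indicator (S p (- int (k + m + 1))) x"])
  finally show ?thesis .
qed

definition KT :: real where
  "KT = 2 * (4 * B * real p ^ CARD('n) * (real (2*CARD('n)+2) / C1) ^ (2*CARD('n)+2))"

lemma KT_nonneg: "0 \<le> KT" unfolding KT_def using ABC by simp

lemma tail_bound:
  "(\<integral>\<^sup>+x. ennreal (2 * indicator (Qpn p - S p (- int m)) x * \<bar>J (vnorm p x)\<bar>) \<partial>M)
    \<le> ennreal (KT * (1 / real p) ^ ((CARD('n)+1) * m))"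
proof -
  define n where "n = CARD('n)"
  define K1 where "K1 = 4 * B * real p ^ n * (real (2*n+2) / C1) ^ (2*n+2)"
  define r where "r = 1 / real p"
  have r: "0 < r" "r \<le> 1/2" unfolding r_def using p2 by (auto simp: field_simps)
  have K1: "0 \<le> K1" unfolding K1_def using ABC by simp
  define c where "c = (\<lambda>k. 2 * B * exp (- C1 * real p ^ (k + m)))"
  have "(\<integral>\<^sup>+x. ennreal (2 * indicator (Qpn p - S p (- int m)) x * \<bar>J (vnorm p x)\<bar>) \<partial>M)
     \<le> (\<integral>\<^sup>+x. (\<Sum>k. ennreal (c k) * indicator (S p (- int (k + m + 1))) x) \<partial>M)"
    unfolding c_def by (rule nn_integral_mono) (rule tail_pt)
  also have "\<dots> = (\<Sum>k. \<integral>\<^sup>+x. ennreal (c k) * indicator (S p (- int (k + m + 1))) x \<partial>M)"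
    by (rule nn_integral_suminf) (use S_setsM in measurable)
  also have "\<dots> = (\<Sum>k. ennreal (c k) * emeasure M (S p (- int (k + m + 1))))"
    by (simp add: nn_integral_cmult_indicator S_setsM)
  also have "\<dots> \<le> (\<Sum>k. ennreal (K1 * (r ^ ((n+1)*m) * r ^ k)))"
  proof (rule suminf_le)
    fix k
    have "emeasure M (S p (- int (k + m + 1))) \<le> ennreal (2 * real p ^ (n * (k + m + 1)))"
      using emM[OF S_setsM] haar_S_le[of "- int (k + m + 1)"] unfolding powr_nat_eq n_def by simp
    then have "ennreal (c k) * emeasure M (S p (- int (k + m + 1))) \<le> ennreal (c k) * ennreal (2 * real p ^ (n * (k + m + 1)))"
      by (intro mult_left_mono) auto
    also have "\<dots> = ennreal (c k * (2 * real p ^ (n * (k + m + 1))))"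
      by (rule ennreal_mult[symmetric]) (use ABC in \<open>auto simp: c_def\<close>)
    also have "\<dots> \<le> ennreal (K1 * (r ^ ((n+1)*m) * r ^ k))"
    proof (intro ennreal_leI)
      have "2 \<le> real p" using p2 by simp
      from num_bound[where P="real p" and cc=C1 and bb=B and n=n and k=k and m=m, OF this ABC(3) ABC(2)]
      show "c k * (2 * real p ^ (n * (k + m + 1))) \<le> K1 * (r ^ ((n+1)*m) * r ^ k)"
        unfolding c_def K1_def r_def by simp
    qed
    finally show "ennreal (c k) * emeasure M (S p (- int (k + m + 1))) \<le> ennreal (K1 * (r ^ ((n+1)*m) * r ^ k))" .
  qed (rule summableI)+
  also have "\<dots> = ennreal (\<Sum>k. K1 * (r ^ ((n+1)*m) * r ^ k))"
    by (rule suminf_ennreal2) (use K1 r in \<open>auto intro!: summable_mult summable_geometric\<close>)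
  also have "\<dots> \<le> ennreal (KT * (1 / real p) ^ ((CARD('n)+1) * m))"
  proof (rule ennreal_leI)
    have "(\<Sum>k. K1 * (r ^ ((n+1)*m) * r ^ k)) = K1 * r ^ ((n+1)*m) * (1 / (1 - r))"
      using r by (simp add: suminf_mult suminf_geometric mult.assoc)
    also have "\<dots> \<le> K1 * r ^ ((n+1)*m) * 2"
    proof (rule mult_left_mono)
      show "1 / (1 - r) \<le> 2" using r by (simp add: field_simps)
      show "0 \<le> K1 * r ^ ((n+1)*m)" using K1 r by simp
    qed
    also have "\<dots> = KT * (1 / real p) ^ ((CARD('n)+1) * m)"
    proof -
      have "KT = 2 * K1" unfolding KT_def K1_def n_def ..
      then show ?thesis unfolding r_def n_def by (simp only: mult_ac)
    qed
    finally show "(\<Sum>k. K1 * (r ^ ((n+1)*m) * r ^ k)) \<le> KT * (1 / real p) ^ ((CARD('n)+1) * m)" .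
  qed
  finally show ?thesis .
qed

end


context ctx begin

lemma KT_pos: "0 < KT" unfolding KT_def using ABC p2 by simp

lemma q_eq: "q = (1 / real p) ^ CARD('n)"
proof -
  have "real p powr (- real CARD('n)) = 1 / real p powr (real CARD('n))" by (simp add: powr_minus_divide)
  also have "real p powr real CARD('n) = real p ^ CARD('n)" using p2 by (intro powr_realpow) auto
  also have "1 / real p ^ CARD('n) = (1 / real p) ^ CARD('n)" by (rule power_one_over[symmetric])
  finally show ?thesis unfolding q_def .
qed

lemma Sm_sub_S0: "S p (int m) \<subseteq> S p 0" by (rule S_mono[OF p2]) simp

lemma S0_set: "{\<eta> \<in> Qpn p. vnorm p \<eta> \<le> 1} = (S p 0 :: ('n \<Rightarrow> nat \<Rightarrow> rat) set)"
proof (rule set_eqI)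
  fix x :: "'n \<Rightarrow> nat \<Rightarrow> rat"
  have e: "real p powr (- real_of_int 0) = 1" using p2 by simp
  show "x \<in> {\<eta> \<in> Qpn p. vnorm p \<eta> \<le> 1} \<longleftrightarrow> x \<in> S p 0"
    using S_vnorm[OF p2, of x 0] unfolding e by simp
qed

lemma f_lower:
  assumes xi: "(\<xi> :: 'n \<Rightarrow> nat \<Rightarrow> rat) \<in> S p (int m)" and nz: "\<xi> \<noteq> Z"
  shows "1 / (KT * (1 / real p) ^ ((CARD('n)+1) * m)) \<le>
    norm (indicator {\<eta> \<in> Qpn p. vnorm p \<eta> \<le> 1} \<xi> / (1 - fourierJ p J \<xi>) :: complex)"
proof -
  have x0: "\<xi> \<in> S p 0" using xi Sm_sub_S0 by blast
  have ind: "indicator {\<eta> \<in> Qpn p. vnorm p \<eta> \<le> 1} \<xi> = (1::complex)" unfolding S0_set using x0 by simp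
  have "ennreal (norm (1 - fourierJ p J \<xi>)) \<le> ennreal (KT * (1 / real p) ^ ((CARD('n)+1) * m))"
    using norm_one_minus_F[OF xi] tail_bound[of m] by (rule order_trans)
  then have le: "norm (1 - fourierJ p J \<xi>) \<le> KT * (1 / real p) ^ ((CARD('n)+1) * m)"
    using KT_nonneg p2 by (subst (asm) ennreal_le_iff) auto
  have ne: "norm (1 - fourierJ p J \<xi>) \<noteq> 0" using F_ne_1[OF x0 nz] by simp
  then have np: "0 < norm (1 - fourierJ p J \<xi>)" by simp
  then have rp: "0 < KT * (1 / real p) ^ ((CARD('n)+1) * m)" using le by linarith
  have "1 / (KT * (1 / real p) ^ ((CARD('n)+1) * m)) \<le> 1 / norm (1 - fourierJ p J \<xi>)"
    by (rule divide_left_mono[OF le zero_le_one mult_pos_pos[OF rp np]])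
  also have "\<dots> = norm (indicator {\<eta> \<in> Qpn p. vnorm p \<eta> \<le> 1} \<xi> / (1 - fourierJ p J \<xi>) :: complex)"
    unfolding ind by (simp add: norm_divide)
  finally show ?thesis .
qed

theorem main:
  "\<not> integrable M (\<lambda>\<xi>. indicator {\<eta> \<in> Qpn p. vnorm p \<eta> \<le> 1} \<xi> / (1 - fourierJ p J \<xi>) :: complex)"
proof
  define f where "f = (\<lambda>\<xi> :: 'n \<Rightarrow> nat \<Rightarrow> rat. indicator {\<eta> \<in> Qpn p. vnorm p \<eta> \<le> 1} \<xi> / (1 - fourierJ p J \<xi>) :: complex)"
  assume "integrable M (\<lambda>\<xi>. indicator {\<eta> \<in> Qpn p. vnorm p \<eta> \<le> 1} \<xi> / (1 - fourierJ p J \<xi>) :: complex)"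
  then have "integrable M f" unfolding f_def .
  then have fin: "(\<integral>\<^sup>+x. ennreal (norm (f x)) \<partial>M) < \<infinity>" by (simp add: integrable_iff_bounded)
  then have "(\<integral>\<^sup>+x. ennreal (norm (f x)) \<partial>M) < top" by simp
  then obtain I where I: "0 \<le> I" "(\<integral>\<^sup>+x. ennreal (norm (f x)) \<partial>M) = ennreal I"
    unfolding less_top_ennreal by blast
  have "emeasure M (S p 0) < top" using S0_fin by (simp add: le_less_trans)
  then obtain s where s: "0 \<le> s" "emeasure M (S p 0) = ennreal s"
    unfolding less_top_ennreal by blast
  have s0: "0 < s" using S0_pos s by (cases "s = 0") auto
  define n where "n = CARD('n)"
  have bound: "real p ^ m / KT * s \<le> I" for m
  proof -
    define c where "c = 1 / (KT * (1 / real p) ^ ((n+1) * m))"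
    have c0: "0 \<le> c" unfolding c_def using KT_pos p2 by simp
    have "AE x in M. ennreal c * indicator (S p (int m)) x \<le> ennreal (norm (f x))"
      using AE_notZ
    proof eventually_elim
      case (elim x)
      show ?case
      proof (cases "x \<in> S p (int m)")
        case True
        then show ?thesis using f_lower[OF True elim] unfolding c_def f_def n_def by (simp add: ennreal_leI)
      qed simp
    qed
    then have "(\<integral>\<^sup>+x. ennreal c * indicator (S p (int m)) x \<partial>M) \<le> (\<integral>\<^sup>+x. ennreal (norm (f x)) \<partial>M)"
      by (rule nn_integral_mono_AE)
    then have "(\<integral>\<^sup>+x. ennreal c * indicator (S p (int m)) x \<partial>M) \<le> ennreal I" using I(2) by simp
    then have "ennreal c * emeasure M (S p (int m)) \<le> ennreal I"
      by (simp add: nn_integral_cmult_indicator S_setsM)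
    moreover have "ennreal c * (ennreal (q ^ m) * emeasure M (S p 0)) \<le> ennreal c * emeasure M (S p (int m))"
      using S_lower by (intro mult_left_mono) auto
    ultimately have "ennreal (c * (q ^ m * s)) \<le> ennreal I"
      using s c0 q_pos by (simp add: ennreal_mult)
    then have le: "c * (q ^ m * s) \<le> I" using I(1) by simp
    have "c * q ^ m = real p ^ m / KT"
    proof -
      have "q ^ m = (1 / real p) ^ (n * m)" unfolding q_eq n_def by (simp add: power_mult)
      moreover have "(1 / real p) ^ ((n+1) * m) = (1 / real p) ^ (n * m) * (1 / real p) ^ m"
        by (simp add: algebra_simps power_add)
      ultimately show ?thesis unfolding c_def using p2 KT_pos by (simp add: field_simps power_one_over)
    qed
    then have "c * (q ^ m * s) = real p ^ m / KT * s" by (metis mult.assoc)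
    then show ?thesis using le by simp
  qed
  obtain m where m: "I * KT / s < real p ^ m" using real_arch_pow[of "real p" "I * KT / s"] p2 by auto
  have "real p ^ m / KT * s \<le> I" by (rule bound)
  then have "real p ^ m \<le> I * KT / s" using KT_pos s0 by (simp add: field_simps)
  then show False using m by simp
qed

end

theorem lemma2:
  fixes p :: nat and J :: "real \<Rightarrow> real" and \<gamma> :: real
  assumes "prime p"
    and "continuous_on {0<..} J"
    and "\<forall>t>0. J t \<ge> 0"
    and "integrable (haar p) (\<lambda>x::'n::finite \<Rightarrow> nat \<Rightarrow> rat. J (vnorm p x))"
    and "(\<integral>x. J (vnorm p (x::'n \<Rightarrow> nat \<Rightarrow> rat)) \<partial>haar p) = 1"
    and "- real CARD('n) < \<gamma>" and "\<gamma> < 0"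
    and "\<exists>A B C1. A > 0 \<and> B > 0 \<and> C1 > 0 \<and>
           (\<forall>x::'n \<Rightarrow> nat \<Rightarrow> rat. x \<in> Qpn p \<longrightarrow> x \<noteq> (\<lambda>i. pzero) \<longrightarrow>
              A * vnorm p x powr \<gamma> * exp (- C1 * vnorm p x) \<le> J (vnorm p x) \<and>
              J (vnorm p x) \<le> B * vnorm p x powr \<gamma> * exp (- C1 * vnorm p x))"
  shows "\<not> integrable (haar p)
            (\<lambda>\<xi>::'n \<Rightarrow> nat \<Rightarrow> rat. indicator {\<eta> \<in> Qpn p. vnorm p \<eta> \<le> 1} \<xi>
                                    / (1 - fourierJ p J \<xi>) :: complex)"
proof -
  obtain A B C1 where ABC: "A > 0" "B > 0" "C1 > 0"
    and Jb: "\<forall>x::'n \<Rightarrow> nat \<Rightarrow> rat. x \<in> Qpn p \<longrightarrow> x \<noteq> (\<lambda>i. pzero) \<longrightarrow>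
              A * vnorm p x powr \<gamma> * exp (- C1 * vnorm p x) \<le> J (vnorm p x) \<and>
              J (vnorm p x) \<le> B * vnorm p x powr \<gamma> * exp (- C1 * vnorm p x)"
    using assms(8) by blast
  have p2: "2 \<le> p" using assms(1) by (rule prime_ge_2_nat)
  interpret ctx p J \<gamma> A B C1 "haar p :: ('n \<Rightarrow> nat \<Rightarrow> rat) measure"
    by (unfold_locales) (use p2 assms(3,4,5,7) ABC Jb in auto)
  show ?thesis using main by simp
qed

end
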